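(* Let $W$ be an affine Weyl group, $w\in W$, $i\in D_R(w)$, and let $r_1,\dots,r_n$ be reflections with $H_{r_t}=H_{\alpha,c+t}$ for some root $\alpha$ and $c\in\mathbb{Z}$, such that $\ell(r_t\cdots r_1ws_i)=\ell(r_{t-1}\cdots r_1ws_i)+1$ for all $1\le t\le n$. Let $j\in D_R(r_n\cdots r_1ws_i)$. If $r_t\cdots r_1ws_i\neq r_{t-1}\cdots r_1ws_is_j$ for all $1\le t\le n$, then $j\in D_R(r_t\cdots r_1ws_i)$ for all $1\le t\le n$.
   Context: $W$ is the affine Weyl group of a crystallographic root system $\Phi$, a Coxeter group with simple generators $s_i$; $H_{\beta,k}=\{v:\langle v,\beta\rangle=k\}$ and reflections of $W$ are the reflections in these hyperplanes; $H_r$ denotes the hyperplane of the reflection $r$. $\ell$ is length and $D_R(x)=\{i:\ell(xs_i)<\ell(x)\}$ is the right descent set. *)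

theory Defs
  imports "HOL-Analysis.Analysis"
begin

definition coroot :: "'a::euclidean_space \<Rightarrow> 'a" where
  "coroot \<beta> = (2 / (\<beta> \<bullet> \<beta>)) *\<^sub>R \<beta>"

definition hyp :: "'a::euclidean_space \<Rightarrow> real \<Rightarrow> 'a set" where
  "hyp \<beta> k = {v. v \<bullet> \<beta> = k}"

definition refl :: "'a::euclidean_space \<Rightarrow> real \<Rightarrow> 'a \<Rightarrow> 'a" where
  "refl \<beta> k v = v - (v \<bullet> \<beta> - k) *\<^sub>R coroot \<beta>"

definition root_system :: "'a::euclidean_space set \<Rightarrow> bool" where
  "root_system \<Phi> \<longleftrightarrow> finite \<Phi> \<and> 0 \<notin> \<Phi> \<and> span \<Phi> = UNIV \<and>
     (\<forall>\<alpha>\<in>\<Phi>. \<forall>\<beta>\<in>\<Phi>. refl \<alpha> 0 \<beta> \<in> \<Phi>) \<and>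
     (\<forall>\<alpha>\<in>\<Phi>. \<forall>\<beta>\<in>\<Phi>. 2 * (\<alpha> \<bullet> \<beta>) / (\<alpha> \<bullet> \<alpha>) \<in> \<int>) \<and>
     (\<forall>\<alpha>\<in>\<Phi>. \<forall>c. c *\<^sub>R \<alpha> \<in> \<Phi> \<longrightarrow> c = 1 \<or> c = -1)"

definition hyps :: "'a::euclidean_space set \<Rightarrow> 'a set set" where
  "hyps \<Phi> = {hyp \<beta> (of_int k) | \<beta> k. \<beta> \<in> \<Phi>}"

definition affrefls :: "'a::euclidean_space set \<Rightarrow> ('a \<Rightarrow> 'a) set" where
  "affrefls \<Phi> = {refl \<beta> (of_int k) | \<beta> k. \<beta> \<in> \<Phi>}"

definition fixH :: "('a \<Rightarrow> 'a) \<Rightarrow> 'a set" where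
  "fixH r = {v. r v = v}"

inductive_set affW :: "'a::euclidean_space set \<Rightarrow> ('a \<Rightarrow> 'a) set" for \<Phi> where
  id_in: "id \<in> affW \<Phi>"
| step: "r \<in> affrefls \<Phi> \<Longrightarrow> w \<in> affW \<Phi> \<Longrightarrow> r \<circ> w \<in> affW \<Phi>"

definition regular :: "'a::euclidean_space set \<Rightarrow> 'a \<Rightarrow> bool" where
  "regular \<Phi> \<xi> \<longleftrightarrow> (\<forall>\<alpha>\<in>\<Phi>. \<alpha> \<bullet> \<xi> \<noteq> 0)"

definition posroots :: "'a::euclidean_space set \<Rightarrow> 'a \<Rightarrow> 'a set" where
  "posroots \<Phi> \<xi> = {\<alpha>\<in>\<Phi>. \<alpha> \<bullet> \<xi> > 0}"

definition alcove0 :: "'a::euclidean_space set \<Rightarrow> 'a \<Rightarrow> 'a set" where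
  "alcove0 \<Phi> \<xi> = {v. \<forall>\<alpha>\<in>posroots \<Phi> \<xi>. 0 < v \<bullet> \<alpha> \<and> v \<bullet> \<alpha> < 1}"

definition wall :: "'a::euclidean_space set \<Rightarrow> 'a \<Rightarrow> 'a set \<Rightarrow> bool" where
  "wall \<Phi> \<xi> H \<longleftrightarrow> H \<in> hyps \<Phi> \<and>
     (\<exists>p \<in> closure (alcove0 \<Phi> \<xi>) \<inter> H. \<forall>H' \<in> hyps \<Phi>. p \<in> H' \<longrightarrow> H' = H)"

definition simples :: "'a::euclidean_space set \<Rightarrow> 'a \<Rightarrow> ('a \<Rightarrow> 'a) set" where
  "simples \<Phi> \<xi> = {refl \<beta> (of_int k) | \<beta> k. \<beta> \<in> \<Phi> \<and> wall \<Phi> \<xi> (hyp \<beta> (of_int k))}"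

definition len :: "'a::euclidean_space set \<Rightarrow> 'a \<Rightarrow> ('a \<Rightarrow> 'a) \<Rightarrow> nat" where
  "len \<Phi> \<xi> w = (LEAST n. \<exists>xs. length xs = n \<and> set xs \<subseteq> simples \<Phi> \<xi> \<and> foldr (\<circ>) xs id = w)"

text \<open>Right descent set (indexed by the simple reflections themselves).\<close>
definition DR :: "'a::euclidean_space set \<Rightarrow> 'a \<Rightarrow> ('a \<Rightarrow> 'a) \<Rightarrow> ('a \<Rightarrow> 'a) set" where
  "DR \<Phi> \<xi> x = {s \<in> simples \<Phi> \<xi>. len \<Phi> \<xi> (x \<circ> s) < len \<Phi> \<xi> x}"

primrec rprod :: "(nat \<Rightarrow> 'a \<Rightarrow> 'a) \<Rightarrow> nat \<Rightarrow> 'a \<Rightarrow> 'a" where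
  "rprod r 0 = id"
| "rprod r (Suc t) = r (Suc t) \<circ> rprod r t"

end

theory Submission
  imports Defs
begin

definition fL :: "('a::euclidean_space \<times> real) \<Rightarrow> 'a \<Rightarrow> real" where
  "fL L v = v \<bullet> fst L - snd L"
definition rl :: "('a::euclidean_space \<times> real) \<Rightarrow> 'a \<Rightarrow> 'a" where
  "rl L = refl (fst L) (snd L)"
definition negL :: "('a::euclidean_space \<times> real) \<Rightarrow> 'a \<times> real" where
  "negL L = (- fst L, - snd L)"
definition actL :: "('a::euclidean_space \<times> real) \<Rightarrow> ('a \<times> real) \<Rightarrow> 'a \<times> real" where
  "actL M L = (refl (fst M) 0 (fst L), snd L - snd M * (fst L \<bullet> coroot (fst M)))"

lemma rl_apply: "rl L v = v - fL L v *\<^sub>R coroot (fst L)"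
  by (simp add: rl_def refl_def fL_def)

lemma coroot_self: "b \<noteq> 0 \<Longrightarrow> b \<bullet> coroot b = 2"
  by (simp add: coroot_def inner_commute)

lemma coroot_self': "b \<noteq> 0 \<Longrightarrow> coroot b \<bullet> b = 2"
  by (simp add: coroot_def)

lemma coroot_coroot: "coroot b \<bullet> coroot b = 4 / (b \<bullet> b)"
  by (simp add: coroot_def power2_eq_square)

lemma fL_rl: "fL L (rl M v) = fL L v - (fst L \<bullet> coroot (fst M)) * fL M v"
  by (simp add: rl_apply fL_def inner_diff_left algebra_simps inner_commute)

lemma fL_actL: "fL L (rl M v) = fL (actL M L) v"
proof -
  obtain a j where M: "M = (a, j)" by force
  obtain b k where L: "L = (b, k)" by force
  show ?thesis
    unfolding M L fL_rl
    by (simp add: fL_def actL_def refl_def coroot_def inner_diff_right inner_diff_left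
        algebra_simps inner_commute diff_divide_distrib)
qed

lemma fL_rl_self: "fst M \<noteq> 0 \<Longrightarrow> fL M (rl M v) = - fL M v"
  by (simp add: fL_rl coroot_self)

lemma rl_invol: "fst M \<noteq> 0 \<Longrightarrow> rl M (rl M v) = v"
  by (simp add: rl_apply[of M "rl M v"] fL_rl_self) (simp add: rl_apply)

lemma fL_neg: "fL (negL L) v = - fL L v"
  by (simp add: fL_def negL_def)

lemma coroot_neg: "coroot (- b) = - coroot b"
  by (simp add: coroot_def)

lemma rl_neg: "rl (negL L) = rl L"
  by (rule ext) (simp add: rl_apply fL_def negL_def coroot_neg algebra_simps)

lemma fL_eqI: "(\<And>v. fL L v = fL L' v) \<Longrightarrow> L = L'"
proof -
  assume h: "\<And>v. fL L v = fL L' v"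
  have k: "snd L = snd L'" using h[of 0] by (simp add: fL_def)
  have "\<And>v. v \<bullet> (fst L - fst L') = 0" using h k by (simp add: fL_def inner_diff_right)
  from this[of "fst L - fst L'"] have "fst L = fst L'" by simp
  with k show ?thesis by (simp add: prod_eq_iff)
qed

lemma refl0_linear: "refl a 0 (x + y) = refl a 0 x + refl a 0 y"
  "refl a 0 (t *\<^sub>R x) = t *\<^sub>R refl a 0 x"
  by (simp_all add: refl_def inner_add_left algebra_simps)

lemma refl0_norm: "a \<noteq> 0 \<Longrightarrow> refl a 0 x \<bullet> refl a 0 x = x \<bullet> x"
  by (simp add: refl_def coroot_def inner_diff_left inner_diff_right algebra_simps
      inner_commute power2_eq_square)

lemma refl_invol: "a \<noteq> 0 \<Longrightarrow> refl a k (refl a k v) = v"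
  using rl_invol[of "(a,k)" v] by (simp add: rl_def)

lemma coroot_refl: "a \<noteq> 0 \<Longrightarrow> coroot (refl a 0 b) = refl a 0 (coroot b)"
  by (simp add: coroot_def refl0_norm refl0_linear)

lemma rl_affine: "rl M (u - t *\<^sub>R b) = rl M u - t *\<^sub>R refl (fst M) 0 b"
  by (simp add: rl_def refl_def inner_diff_left algebra_simps)

lemma rl_conj:
  assumes "fst M \<noteq> 0"
  shows "rl M (rl L (rl M v)) = rl (actL M L) v"
proof -
  have "rl M (rl L (rl M v)) = rl M (rl M v - fL L (rl M v) *\<^sub>R coroot (fst L))"
    by (simp add: rl_apply[of L])
  also have "\<dots> = v - fL (actL M L) v *\<^sub>R refl (fst M) 0 (coroot (fst L))"
    by (simp add: rl_affine rl_invol assms fL_actL)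
  also have "\<dots> = rl (actL M L) v"
    unfolding rl_apply[of "actL M L" v] by (simp add: actL_def coroot_refl assms)
  finally show ?thesis .
qed

lemma rl_comm:
  assumes "fst M \<noteq> 0"
  shows "rl L (rl M v) = rl M (rl (actL M L) v)"
  using rl_conj[OF assms, of L v, symmetric] rl_invol[OF assms]
  by (metis)

lemma actL_invol: "fst M \<noteq> 0 \<Longrightarrow> actL M (actL M L) = L"
  by (rule fL_eqI) (metis fL_actL rl_invol)

lemma actL_neg: "actL M (negL L) = negL (actL M L)"
  by (rule fL_eqI) (metis fL_actL fL_neg)

lemma refl_norm_dist: "a \<noteq> 0 \<Longrightarrow> norm (refl a k x - refl a k y) = norm (x - y)"
proof -
  assume a: "a \<noteq> 0"
  have "refl a k x - refl a k y = refl a 0 (x - y)"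
    by (simp add: refl_def inner_diff_left algebra_simps)
  then show ?thesis using refl0_norm[OF a, of "x - y"]
    by (simp add: norm_eq_sqrt_inner)
qed


definition Lab :: "'a::euclidean_space set \<Rightarrow> ('a \<times> real) set" where
  "Lab \<Phi> = \<Phi> \<times> (\<int> :: real set)"

definition pb :: "('a::euclidean_space \<Rightarrow> 'a) \<Rightarrow> ('a \<times> real) \<Rightarrow> 'a \<times> real" where
  "pb w L = (THE L'. \<forall>v. fL L (w v) = fL L' v)"

lemma pb_eq: "(\<And>v. fL L (w v) = fL L' v) \<Longrightarrow> pb w L = L'"
  unfolding pb_def
  by (rule the_equality) (auto intro: fL_eqI)

lemma pb_rl: "pb (rl M) L = actL M L"
  by (rule pb_eq) (simp add: fL_actL)

lemma pb_id: "pb id L = L"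
  by (rule pb_eq) simp

lemma pb_id': "pb (\<lambda>x. x) L = L"
  by (rule pb_eq) simp

locale aws =
  fixes \<Phi> :: "'a::euclidean_space set" and \<xi> :: 'a
  assumes RS: "root_system \<Phi>" and REG: "regular \<Phi> \<xi>"
begin

lemma root_fin: "finite \<Phi>" using RS by (simp add: root_system_def)

lemma root_nz: "\<beta> \<in> \<Phi> \<Longrightarrow> \<beta> \<noteq> 0" using RS by (auto simp: root_system_def)

lemma root_refl: "\<alpha> \<in> \<Phi> \<Longrightarrow> \<beta> \<in> \<Phi> \<Longrightarrow> refl \<alpha> 0 \<beta> \<in> \<Phi>"
  using RS by (auto simp: root_system_def)

lemma root_neg: "\<beta> \<in> \<Phi> \<Longrightarrow> - \<beta> \<in> \<Phi>"
proof -
  assume b: "\<beta> \<in> \<Phi>"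
  have "refl \<beta> 0 \<beta> = \<beta> - 2 *\<^sub>R \<beta>"
    using root_nz[OF b] by (simp add: refl_def coroot_def)
  also have "\<dots> = - \<beta>" by (simp add: algebra_simps scaleR_2)
  finally show ?thesis using root_refl[OF b b] by simp
qed

lemma root_int: "\<alpha> \<in> \<Phi> \<Longrightarrow> \<beta> \<in> \<Phi> \<Longrightarrow> \<beta> \<bullet> coroot \<alpha> \<in> \<int>"
proof -
  assume "\<alpha> \<in> \<Phi>" "\<beta> \<in> \<Phi>"
  then have "2 * (\<alpha> \<bullet> \<beta>) / (\<alpha> \<bullet> \<alpha>) \<in> \<int>" using RS by (auto simp: root_system_def)
  moreover have "\<beta> \<bullet> coroot \<alpha> = 2 * (\<alpha> \<bullet> \<beta>) / (\<alpha> \<bullet> \<alpha>)"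
    by (simp add: coroot_def inner_commute)
  ultimately show ?thesis by simp
qed

lemma root_reduced: "\<alpha> \<in> \<Phi> \<Longrightarrow> c *\<^sub>R \<alpha> \<in> \<Phi> \<Longrightarrow> c = 1 \<or> c = -1"
  using RS by (auto simp: root_system_def)

lemma Lab_nz: "L \<in> Lab \<Phi> \<Longrightarrow> fst L \<noteq> 0"
  by (auto simp: Lab_def root_nz)

lemma Lab_neg: "L \<in> Lab \<Phi> \<Longrightarrow> negL L \<in> Lab \<Phi>"
  by (auto simp: Lab_def negL_def root_neg)

lemma Lab_act: "M \<in> Lab \<Phi> \<Longrightarrow> L \<in> Lab \<Phi> \<Longrightarrow> actL M L \<in> Lab \<Phi>"
  by (auto simp: Lab_def actL_def root_refl root_int)

lemma negL_neq: "L \<in> Lab \<Phi> \<Longrightarrow> negL L \<noteq> L"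
proof
  assume L: "L \<in> Lab \<Phi>" and e: "negL L = L"
  then have "- fst L = fst L" by (simp add: negL_def prod_eq_iff)
  then have "fst L + fst L = 0" by (metis add.left_inverse)
  then have "fst L = 0" by (simp add: scaleR_2[symmetric])
  with Lab_nz[OF L] show False by simp
qed

lemma negL_negL: "negL (negL L) = L" by (simp add: negL_def)

lemma affrefls_Lab: "r \<in> affrefls \<Phi> \<longleftrightarrow> (\<exists>L\<in>Lab \<Phi>. r = rl L)"
proof
  assume "r \<in> affrefls \<Phi>"
  then obtain \<beta> k where "r = refl \<beta> (of_int k)" "\<beta> \<in> \<Phi>" by (auto simp: affrefls_def)
  then show "\<exists>L\<in>Lab \<Phi>. r = rl L"
    by (intro bexI[of _ "(\<beta>, of_int k)"]) (auto simp: rl_def Lab_def)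
next
  assume "\<exists>L\<in>Lab \<Phi>. r = rl L"
  then obtain \<beta> k where "\<beta> \<in> \<Phi>" "k \<in> (\<int>::real set)" "r = refl \<beta> k"
    by (auto simp: Lab_def rl_def)
  then show "r \<in> affrefls \<Phi>"
    unfolding affrefls_def by (auto elim!: Ints_cases)
qed

lemma rl_affW: "L \<in> Lab \<Phi> \<Longrightarrow> rl L \<in> affW \<Phi>"
  using affW.step[of "rl L" \<Phi> id] affrefls_Lab[of "rl L"] by (auto intro: affW.id_in)

lemma affW_comp: "w1 \<in> affW \<Phi> \<Longrightarrow> w2 \<in> affW \<Phi> \<Longrightarrow> w1 \<circ> w2 \<in> affW \<Phi>"
  by (induction w1 rule: affW.induct) (auto simp: comp_assoc intro: affW.step)

lemma affW_cases': "w \<in> affW \<Phi> \<Longrightarrow> w = id \<or> (\<exists>M\<in>Lab \<Phi>. \<exists>w'\<in>affW \<Phi>. w = rl M \<circ> w')"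
  by (induction w rule: affW.induct) (auto simp: affrefls_Lab)

lemma pb_ex: "w \<in> affW \<Phi> \<Longrightarrow> L \<in> Lab \<Phi> \<Longrightarrow> \<exists>L'\<in>Lab \<Phi>. \<forall>v. fL L (w v) = fL L' v"
proof (induction w arbitrary: L rule: affW.induct)
  case id_in
  then show ?case by auto
next
  case (step r w)
  then obtain M where M: "M \<in> Lab \<Phi>" "r = rl M" by (auto simp: affrefls_Lab)
  then have "actL M L \<in> Lab \<Phi>" using Lab_act step by auto
  then obtain L' where "L' \<in> Lab \<Phi>" "\<forall>v. fL (actL M L) (w v) = fL L' v" using step by blast
  then show ?case using M by (auto simp: fL_actL)
qed

lemma pb_char: "w \<in> affW \<Phi> \<Longrightarrow> L \<in> Lab \<Phi> \<Longrightarrow> pb w L \<in> Lab \<Phi> \<and> (\<forall>v. fL L (w v) = fL (pb w L) v)"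
proof -
  assume a: "w \<in> affW \<Phi>" "L \<in> Lab \<Phi>"
  obtain L' where "L' \<in> Lab \<Phi>" "\<forall>v. fL L (w v) = fL L' v" using pb_ex[OF a] by blast
  moreover then have "pb w L = L'" by (intro pb_eq) blast
  ultimately show ?thesis by simp
qed

lemma pb_Lab: "w \<in> affW \<Phi> \<Longrightarrow> L \<in> Lab \<Phi> \<Longrightarrow> pb w L \<in> Lab \<Phi>"
  using pb_char by blast

lemma pb_fL: "w \<in> affW \<Phi> \<Longrightarrow> L \<in> Lab \<Phi> \<Longrightarrow> fL L (w v) = fL (pb w L) v"
  using pb_char by blast

lemma pb_comp: "w1 \<in> affW \<Phi> \<Longrightarrow> w2 \<in> affW \<Phi> \<Longrightarrow> L \<in> Lab \<Phi> \<Longrightarrow>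
   pb (w1 \<circ> w2) L = pb w2 (pb w1 L)"
  by (rule pb_eq) (use pb_fL[of w1 L] pb_fL[of w2 "pb w1 L"] pb_Lab[of w1 L] in simp)

lemma pb_neg: "w \<in> affW \<Phi> \<Longrightarrow> L \<in> Lab \<Phi> \<Longrightarrow> pb w (negL L) = negL (pb w L)"
  by (rule pb_eq) (use pb_fL[of w L] in \<open>simp add: fL_neg\<close>)

lemma actL_bij: "M \<in> Lab \<Phi> \<Longrightarrow> bij_betw (actL M) (Lab \<Phi>) (Lab \<Phi>)"
proof (rule bij_betw_byWitness[where f'="actL M"])
  assume M: "M \<in> Lab \<Phi>"
  have n: "fst M \<noteq> 0" using Lab_nz[OF M] .
  show "\<forall>a\<in>Lab \<Phi>. actL M (actL M a) = a" using actL_invol[OF n] by blast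
  show "\<forall>a\<in>Lab \<Phi>. actL M (actL M a) = a" using actL_invol[OF n] by blast
  show "actL M ` Lab \<Phi> \<subseteq> Lab \<Phi>" using Lab_act[OF M] by blast
  show "actL M ` Lab \<Phi> \<subseteq> Lab \<Phi>" using Lab_act[OF M] by blast
qed

lemma pb_bij: "w \<in> affW \<Phi> \<Longrightarrow> bij_betw (pb w) (Lab \<Phi>) (Lab \<Phi>)"
proof (induction w rule: affW.induct)
  case id_in
  then show ?case by (simp add: pb_id' bij_betw_def)
next
  case (step r w)
  then obtain M where M: "M \<in> Lab \<Phi>" "r = rl M" by (auto simp: affrefls_Lab)
  have "bij_betw (pb w \<circ> actL M) (Lab \<Phi>) (Lab \<Phi>)"
    using bij_betw_trans[OF actL_bij[OF M(1)] step.IH] .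
  moreover have "\<forall>L\<in>Lab \<Phi>. (pb w \<circ> actL M) L = pb (r \<circ> w) L"
  proof
    fix L assume L: "L \<in> Lab \<Phi>"
    have "pb (rl M \<circ> w) L = pb w (pb (rl M) L)"
      by (rule pb_comp[OF rl_affW[OF M(1)] step.hyps(2) L])
    then show "(pb w \<circ> actL M) L = pb (r \<circ> w) L" by (simp add: pb_rl M(2))
  qed
  ultimately show ?case
    using bij_betw_cong[of "Lab \<Phi>" "pb w \<circ> actL M" "pb (r \<circ> w)" "Lab \<Phi>"] by metis
qed

lemma rl_pb_comm: "w \<in> affW \<Phi> \<Longrightarrow> L \<in> Lab \<Phi> \<Longrightarrow> rl L \<circ> w = w \<circ> rl (pb w L)"
proof (induction w arbitrary: L rule: affW.induct)
  case id_in
  then show ?case by (simp add: pb_id')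
next
  case (step r w)
  then obtain M where M: "M \<in> Lab \<Phi>" "r = rl M" by (auto simp: affrefls_Lab)
  have "rl L \<circ> (r \<circ> w) = r \<circ> (rl (actL M L) \<circ> w)"
    using rl_comm[of M L, OF Lab_nz[OF M(1)]] by (simp add: fun_eq_iff M(2))
  also have "\<dots> = r \<circ> (w \<circ> rl (pb w (actL M L)))"
  proof -
    have "rl (actL M L) \<circ> w = w \<circ> rl (pb w (actL M L))"
      using step.IH[of "actL M L"] Lab_act M step.prems by blast
    then show ?thesis by simp
  qed
  also have "pb w (actL M L) = pb (r \<circ> w) L"
  proof -
    have "pb (rl M \<circ> w) L = pb w (pb (rl M) L)"
      by (rule pb_comp[OF rl_affW[OF M(1)] step.hyps(2) step.prems])
    then show ?thesis by (simp add: pb_rl M(2))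
  qed
  finally show ?case by (simp only: comp_assoc)
qed

lemma affW_bij: "w \<in> affW \<Phi> \<Longrightarrow> bij w"
proof (induction w rule: affW.induct)
  case id_in then show ?case by (simp add: bij_def)
next
  case (step r w)
  then obtain M where M: "M \<in> Lab \<Phi>" "r = rl M" by (auto simp: affrefls_Lab)
  have i: "rl M \<circ> rl M = id" by (rule ext) (simp add: rl_invol[OF Lab_nz[OF M(1)]])
  have "bij r" unfolding M(2) by (rule o_bij[OF i i])
  then show ?case using step.IH bij_comp[of w r] by (simp add: comp_def)
qed

end

definition NN :: "'a::euclidean_space set \<Rightarrow> 'a \<Rightarrow> 'a \<Rightarrow> ('a \<times> real) set" where
  "NN \<Phi> p q = {L \<in> Lab \<Phi>. fL L p * fL L q < 0}"

definition c0 :: "'a::euclidean_space set \<Rightarrow> 'a \<Rightarrow> 'a" where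
  "c0 \<Phi> \<xi> = (SOME c. c \<in> alcove0 \<Phi> \<xi>)"

definition n2 :: "'a::euclidean_space set \<Rightarrow> 'a \<Rightarrow> ('a \<Rightarrow> 'a) \<Rightarrow> nat" where
  "n2 \<Phi> \<xi> w = card (NN \<Phi> (c0 \<Phi> \<xi>) (w (c0 \<Phi> \<xi>)))"

lemma int_strip_sign:
  fixes x y :: real
  assumes "m \<in> \<int>" "a < x" "x < a + 1" "a < y" "y < a + 1" "a \<in> \<int>"
  shows "(x - m) * (y - m) > 0"
proof -
  obtain i where i: "m = of_int i" using assms(1) by (auto elim: Ints_cases)
  obtain j where j: "a = of_int j" using assms(6) by (auto elim: Ints_cases)
  have "i \<le> j \<or> i \<ge> j + 1" by linarith
  then have "m \<le> a \<or> m \<ge> a + 1" using i j by force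
  then show ?thesis using assms by (auto intro: mult_pos_pos mult_neg_neg)
qed

lemma sign_transfer:
  fixes a a' b b' :: real
  assumes "a * a' > 0" "b * b' > 0"
  shows "a * b < 0 \<longleftrightarrow> a' * b' < 0"
  using assms by (auto simp: zero_less_mult_iff mult_less_0_iff)

context aws begin

abbreviation C where "C \<equiv> alcove0 \<Phi> \<xi>"

lemma C_bounds:
  assumes c: "c \<in> C" and b: "\<beta> \<in> \<Phi>"
  shows "(0 < c \<bullet> \<beta> \<and> c \<bullet> \<beta> < 1) \<or> (-1 < c \<bullet> \<beta> \<and> c \<bullet> \<beta> < 0)"
proof (cases "\<beta> \<bullet> \<xi> > 0")
  case True
  then have "\<beta> \<in> posroots \<Phi> \<xi>" using b by (simp add: posroots_def)
  then show ?thesis using c by (auto simp: alcove0_def)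
next
  case False
  then have "\<beta> \<bullet> \<xi> < 0" using REG b by (force simp: regular_def)
  then have "- \<beta> \<in> posroots \<Phi> \<xi>" using b root_neg by (simp add: posroots_def)
  then have "0 < c \<bullet> (-\<beta>) \<and> c \<bullet> (-\<beta>) < 1" using c by (auto simp: alcove0_def)
  then show ?thesis by simp
qed

lemma C_sign:
  assumes c: "c \<in> C" and c': "c' \<in> C" and L: "L \<in> Lab \<Phi>"
  shows "fL L c * fL L c' > 0"
proof -
  obtain \<beta> k where Lk: "L = (\<beta>, k)" "\<beta> \<in> \<Phi>" "k \<in> \<int>" using L by (auto simp: Lab_def)
  have B1: "(0 < c \<bullet> \<beta> \<and> c \<bullet> \<beta> < 1) \<or> (-1 < c \<bullet> \<beta> \<and> c \<bullet> \<beta> < 0)"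
    using C_bounds[OF c Lk(2)] .
  have B2: "(0 < c' \<bullet> \<beta> \<and> c' \<bullet> \<beta> < 1) \<or> (-1 < c' \<bullet> \<beta> \<and> c' \<bullet> \<beta> < 0)"
    using C_bounds[OF c' Lk(2)] .
  have same: "(0 < c \<bullet> \<beta>) = (0 < c' \<bullet> \<beta>)"
  proof -
    have "(0 < c \<bullet> \<beta>) = (\<beta> \<bullet> \<xi> > 0)" "(0 < c' \<bullet> \<beta>) = (\<beta> \<bullet> \<xi> > 0)"
    proof -
      have *: "\<And>c. c \<in> C \<Longrightarrow> (0 < c \<bullet> \<beta>) = (\<beta> \<bullet> \<xi> > 0)"
      proof -
        fix c assume c: "c \<in> C"
        show "(0 < c \<bullet> \<beta>) = (\<beta> \<bullet> \<xi> > 0)"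
        proof (cases "\<beta> \<bullet> \<xi> > 0")
          case True
          then have "\<beta> \<in> posroots \<Phi> \<xi>" using Lk by (simp add: posroots_def)
          then show ?thesis using c True by (auto simp: alcove0_def)
        next
          case False
          then have "\<beta> \<bullet> \<xi> < 0" using REG Lk by (force simp: regular_def)
          then have "- \<beta> \<in> posroots \<Phi> \<xi>" using Lk root_neg by (simp add: posroots_def)
          then have "0 < c \<bullet> (-\<beta>)" using c by (auto simp: alcove0_def)
          then show ?thesis using False by simp
        qed
      qed
      show "(0 < c \<bullet> \<beta>) = (\<beta> \<bullet> \<xi> > 0)" using *[OF c] .
      show "(0 < c' \<bullet> \<beta>) = (\<beta> \<bullet> \<xi> > 0)" using *[OF c'] .
    qed
    then show ?thesis by simp
  qed
  have "(c \<bullet> \<beta> - k) * (c' \<bullet> \<beta> - k) > 0"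
  proof (cases "0 < c \<bullet> \<beta>")
    case True
    then show ?thesis using B1 B2 same int_strip_sign[of k 0 "c \<bullet> \<beta>" "c' \<bullet> \<beta>"] Lk(3) by auto
  next
    case False
    then show ?thesis using B1 B2 same int_strip_sign[of k "-1" "c \<bullet> \<beta>" "c' \<bullet> \<beta>"] Lk(3) by auto
  qed
  then show ?thesis by (simp add: fL_def Lk)
qed

lemma C_nz: "c \<in> C \<Longrightarrow> L \<in> Lab \<Phi> \<Longrightarrow> fL L c \<noteq> 0"
  using C_sign[of c c L] by auto

lemma C_charI:
  assumes c: "c \<in> C" and h: "\<forall>L\<in>Lab \<Phi>. fL L v * fL L c > 0"
  shows "v \<in> C"
  unfolding alcove0_def
proof (intro CollectI ballI conjI)
  fix \<alpha> assume a: "\<alpha> \<in> posroots \<Phi> \<xi>"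
  then have a\<Phi>: "\<alpha> \<in> \<Phi>" by (simp add: posroots_def)
  have "(\<alpha>, 0) \<in> Lab \<Phi>" "(\<alpha>, 1) \<in> Lab \<Phi>" using a\<Phi> by (auto simp: Lab_def)
  then have h0: "(v \<bullet> \<alpha>) * (c \<bullet> \<alpha>) > 0" and h1: "(v \<bullet> \<alpha> - 1) * (c \<bullet> \<alpha> - 1) > 0"
    using h by (auto simp: fL_def)
  have "0 < c \<bullet> \<alpha>" "c \<bullet> \<alpha> < 1" using c a by (auto simp: alcove0_def)
  then show "0 < v \<bullet> \<alpha>" "v \<bullet> \<alpha> < 1" using h0 h1 by (auto simp: zero_less_mult_iff)
qed

lemma C_open: "open C"
proof -
  have "C = (\<Inter>\<alpha>\<in>posroots \<Phi> \<xi>. {v. \<alpha> \<bullet> v > 0} \<inter> {v. \<alpha> \<bullet> v < 1})"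
    by (auto simp: alcove0_def inner_commute)
  moreover have "finite (posroots \<Phi> \<xi>)" using root_fin by (simp add: posroots_def)
  ultimately show ?thesis
    by (auto intro!: open_INT open_Int open_halfspace_lt open_halfspace_gt)
qed

lemma C_ne: "\<exists>c. c \<in> C"
proof -
  define S where "S = (\<Sum>\<alpha>\<in>\<Phi>. \<bar>\<alpha> \<bullet> \<xi>\<bar>)"
  have S0: "S \<ge> 0" unfolding S_def by (simp add: sum_nonneg)
  define e where "e = 1 / (1 + S)"
  have e0: "e > 0" using S0 by (simp add: e_def)
  have "e *\<^sub>R \<xi> \<in> C"
    unfolding alcove0_def
  proof (intro CollectI ballI conjI)
    fix \<alpha> assume a: "\<alpha> \<in> posroots \<Phi> \<xi>"
    then have a\<Phi>: "\<alpha> \<in> \<Phi>" and ap: "\<alpha> \<bullet> \<xi> > 0" by (auto simp: posroots_def)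
    have le: "\<alpha> \<bullet> \<xi> \<le> S" unfolding S_def
      using member_le_sum[of \<alpha> \<Phi> "\<lambda>\<alpha>. \<bar>\<alpha> \<bullet> \<xi>\<bar>"] a\<Phi> root_fin by auto
    show "0 < e *\<^sub>R \<xi> \<bullet> \<alpha>" using e0 ap by (simp add: inner_commute)
    have "e *\<^sub>R \<xi> \<bullet> \<alpha> = (\<alpha> \<bullet> \<xi>) / (1 + S)" by (simp add: e_def inner_commute)
    also have "\<dots> < 1" using le S0 by (simp add: divide_less_eq)
    finally show "e *\<^sub>R \<xi> \<bullet> \<alpha> < 1" .
  qed
  then show ?thesis by blast
qed

lemma c0_C: "c0 \<Phi> \<xi> \<in> C"
  unfolding c0_def using C_ne by (rule someI_ex)

lemma Lab_bounded_fin: "finite {L \<in> Lab \<Phi>. \<bar>snd L\<bar> \<le> R (fst L)}"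
proof -
  have "{L \<in> Lab \<Phi>. \<bar>snd L\<bar> \<le> R (fst L)} \<subseteq>
        (\<Union>\<beta>\<in>\<Phi>. {\<beta>} \<times> (real_of_int ` {-\<lceil>R \<beta>\<rceil>..\<lceil>R \<beta>\<rceil>}))"
  proof
    fix L assume A: "L \<in> {L \<in> Lab \<Phi>. \<bar>snd L\<bar> \<le> R (fst L)}"
    then have L1: "fst L \<in> \<Phi>" "snd L \<in> \<int>" "\<bar>snd L\<bar> \<le> R (fst L)"
      by (auto simp: Lab_def)
    from L1(2) obtain i where i: "snd L = of_int i" by (auto elim: Ints_cases)
    have c: "R (fst L) \<le> of_int \<lceil>R (fst L)\<rceil>" by (rule le_of_int_ceiling)
    have "of_int i \<le> (of_int \<lceil>R (fst L)\<rceil> :: real)" "- (of_int \<lceil>R (fst L)\<rceil> :: real) \<le> of_int i"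
      using L1(3) c i by linarith+
    then have "i \<in> {-\<lceil>R (fst L)\<rceil>..\<lceil>R (fst L)\<rceil>}"
      by (simp only: of_int_le_iff of_int_minus[symmetric] atLeastAtMost_iff)
    then have "snd L \<in> real_of_int ` {-\<lceil>R (fst L)\<rceil>..\<lceil>R (fst L)\<rceil>}" using i by blast
    then have "L \<in> {fst L} \<times> (real_of_int ` {-\<lceil>R (fst L)\<rceil>..\<lceil>R (fst L)\<rceil>})"
      unfolding mem_Times_iff by simp
    then show "L \<in> (\<Union>\<beta>\<in>\<Phi>. {\<beta>} \<times> (real_of_int ` {-\<lceil>R \<beta>\<rceil>..\<lceil>R \<beta>\<rceil>}))"
      by (rule UN_I[OF L1(1)])
  qed
  moreover have "finite (\<Union>\<beta>\<in>\<Phi>. {\<beta>} \<times> (real_of_int ` {-\<lceil>R \<beta>\<rceil>..\<lceil>R \<beta>\<rceil>}))"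
    by (rule finite_UN_I[OF root_fin]) simp
  ultimately show ?thesis by (rule finite_subset)
qed

lemma NN_sub: "NN \<Phi> p q \<subseteq> Lab \<Phi>" by (auto simp: NN_def)

lemma NN_fin: "finite (NN \<Phi> p q)"
proof -
  have "NN \<Phi> p q \<subseteq> {L \<in> Lab \<Phi>. \<bar>snd L\<bar> \<le> (\<lambda>\<beta>. \<bar>p \<bullet> \<beta>\<bar> + \<bar>q \<bullet> \<beta>\<bar>) (fst L)}"
  proof
    fix L assume L: "L \<in> NN \<Phi> p q"
    then have "(p \<bullet> fst L - snd L) * (q \<bullet> fst L - snd L) < 0" by (simp add: NN_def fL_def)
    then have "\<bar>snd L\<bar> \<le> \<bar>p \<bullet> fst L\<bar> + \<bar>q \<bullet> fst L\<bar>"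
      unfolding mult_less_0_iff by (elim disjE conjE) linarith+
    then show "L \<in> {L \<in> Lab \<Phi>. \<bar>snd L\<bar> \<le> (\<lambda>\<beta>. \<bar>p \<bullet> \<beta>\<bar> + \<bar>q \<bullet> \<beta>\<bar>) (fst L)}"
      using L by (simp add: NN_def)
  qed
  then show ?thesis by (rule finite_subset[OF _ Lab_bounded_fin])
qed

lemma orbit_nz: "w \<in> affW \<Phi> \<Longrightarrow> c \<in> C \<Longrightarrow> L \<in> Lab \<Phi> \<Longrightarrow> fL L (w c) \<noteq> 0"
  using pb_fL[of w L c] C_nz[of c "pb w L"] pb_Lab by auto

lemma NN_indep:
  assumes w: "w \<in> affW \<Phi>" and c: "c \<in> C" and c': "c' \<in> C"
  shows "NN \<Phi> c (w c) = NN \<Phi> c' (w c')"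
proof -
  have "\<And>L. L \<in> Lab \<Phi> \<Longrightarrow> (fL L c * fL L (w c) < 0) = (fL L c' * fL L (w c') < 0)"
  proof -
    fix L assume L: "L \<in> Lab \<Phi>"
    show "(fL L c * fL L (w c) < 0) = (fL L c' * fL L (w c') < 0)"
      unfolding pb_fL[OF w L]
      by (rule sign_transfer[OF C_sign[OF c c' L] C_sign[OF c c' pb_Lab[OF w L]]])
  qed
  then show ?thesis by (auto simp: NN_def)
qed

lemma n2_eq: "w \<in> affW \<Phi> \<Longrightarrow> c \<in> C \<Longrightarrow> n2 \<Phi> \<xi> w = card (NN \<Phi> c (w c))"
  unfolding n2_def using NN_indep[of w c "c0 \<Phi> \<xi>"] c0_C by simp

end

lemma xor_sign:
  fixes a b c :: real
  assumes "a \<noteq> 0" "b \<noteq> 0" "c \<noteq> 0"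
  shows "(a * c < 0) \<longleftrightarrow> ((a * b < 0) \<noteq> (b * c < 0))"
  using assms by (auto simp: mult_less_0_iff)

lemma same_sign_close:
  fixes x y :: real
  assumes "\<bar>x - y\<bar> < \<bar>y\<bar>"
  shows "x * y > 0"
  using assms by (auto simp: zero_less_mult_iff abs_if split: if_splits)

lemma fL_zero_hyp: "fL L q = 0 \<longleftrightarrow> q \<in> hyp (fst L) (snd L)"
  by (simp add: fL_def hyp_def)

lemma hyp_negL: "hyp (fst (negL L)) (snd (negL L)) = hyp (fst L) (snd L)"
  by (auto simp: hyp_def negL_def)

context aws begin

lemma hyp_eq:
  assumes L: "L \<in> Lab \<Phi>" and L': "L' \<in> Lab \<Phi>"
    and e: "hyp (fst L) (snd L) = hyp (fst L') (snd L')"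
  shows "L' = L \<or> L' = negL L"
proof -
  obtain \<beta> k where Lk: "L = (\<beta>, k)" by force
  obtain \<beta>' k' where Lk': "L' = (\<beta>', k')" by force
  have b0: "\<beta> \<in> \<Phi>" using L Lk by (simp add: Lab_def)
  have b: "\<beta> \<in> \<Phi>" "\<beta> \<noteq> 0" using b0 root_nz[OF b0] by auto
  have b': "\<beta>' \<in> \<Phi>" using L' Lk' by (auto simp: Lab_def)
  have bb: "\<beta> \<bullet> \<beta> \<noteq> 0" using b by simp
  define q0 where "q0 = (k / (\<beta> \<bullet> \<beta>)) *\<^sub>R \<beta>"
  have q0: "q0 \<in> hyp \<beta> k" using bb by (simp add: q0_def hyp_def)
  then have q0': "q0 \<bullet> \<beta>' = k'" using e Lk Lk' by (auto simp: hyp_def)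
  define \<mu> where "\<mu> = (\<beta>' \<bullet> \<beta>) / (\<beta> \<bullet> \<beta>)"
  define u where "u = \<beta>' - \<mu> *\<^sub>R \<beta>"
  have ub: "u \<bullet> \<beta> = 0" using bb by (simp add: u_def \<mu>_def inner_diff_left)
  have "q0 + u \<in> hyp \<beta> k" using q0 ub by (simp add: hyp_def inner_add_left)
  then have "(q0 + u) \<bullet> \<beta>' = k'" using e Lk Lk' by (auto simp: hyp_def)
  then have ub': "u \<bullet> \<beta>' = 0" using q0' by (simp add: inner_add_left)
  have "u \<bullet> u = u \<bullet> \<beta>' - \<mu> * (u \<bullet> \<beta>)" by (simp add: u_def inner_diff_right)
  then have "u = 0" using ub ub' by simp
  then have bm: "\<beta>' = \<mu> *\<^sub>R \<beta>" by (simp add: u_def)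
  then have "\<mu> = 1 \<or> \<mu> = -1" using root_reduced[OF b(1)] b' by simp
  moreover have "k' = \<mu> * k" using q0' bm bb by (simp add: q0_def)
  ultimately show ?thesis using bm Lk Lk' by (auto simp: negL_def)
qed

lemma Lab_hyps: "L \<in> Lab \<Phi> \<Longrightarrow> hyp (fst L) (snd L) \<in> hyps \<Phi>"
proof -
  assume "L \<in> Lab \<Phi>"
  then obtain \<beta> i where "L = (\<beta>, of_int i)" "\<beta> \<in> \<Phi>" by (auto simp: Lab_def elim!: Ints_cases)
  then show ?thesis unfolding hyps_def by auto
qed

lemma hyps_Lab: "H \<in> hyps \<Phi> \<Longrightarrow> \<exists>L\<in>Lab \<Phi>. H = hyp (fst L) (snd L)"
  unfolding Lab_def hyps_def by force

lemma simples_Lab: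
  assumes "s \<in> simples \<Phi> \<xi>"
  shows "\<exists>L\<in>Lab \<Phi>. s = rl L \<and> wall \<Phi> \<xi> (hyp (fst L) (snd L))"
  using assms by (force simp: simples_def Lab_def rl_def)

lemma wall_point:
  assumes L: "L \<in> Lab \<Phi>" and w: "wall \<Phi> \<xi> (hyp (fst L) (snd L))"
  shows "\<exists>q\<in>closure C. fL L q = 0 \<and> (\<forall>L'\<in>Lab \<Phi>. fL L' q = 0 \<longrightarrow> L' = L \<or> L' = negL L)"
proof -
  obtain q where q: "q \<in> closure C" "q \<in> hyp (fst L) (snd L)"
    "\<forall>H'\<in>hyps \<Phi>. q \<in> H' \<longrightarrow> H' = hyp (fst L) (snd L)"
    using w by (auto simp: wall_def)
  have "\<forall>L'\<in>Lab \<Phi>. fL L' q = 0 \<longrightarrow> L' = L \<or> L' = negL L"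
  proof (intro ballI impI)
    fix L' assume L': "L' \<in> Lab \<Phi>" "fL L' q = 0"
    then have "hyp (fst L') (snd L') = hyp (fst L) (snd L)"
      using q(3) Lab_hyps[OF L'(1)] by (simp add: fL_zero_hyp)
    then show "L' = L \<or> L' = negL L" using hyp_eq[OF L L'(1)] by simp
  qed
  then show ?thesis using q by (auto simp: fL_zero_hyp)
qed

lemma local_sign:
  assumes L0: "L0 \<in> Lab \<Phi>"
    and q: "\<forall>L'\<in>Lab \<Phi>. fL L' q = 0 \<longrightarrow> L' = L0 \<or> L' = negL L0"
  shows "\<exists>\<delta>>0. \<forall>v. dist v q < \<delta> \<longrightarrow>
           (\<forall>L\<in>Lab \<Phi>. L \<noteq> L0 \<and> L \<noteq> negL L0 \<longrightarrow> fL L v * fL L q > 0)"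
proof -
  define B where "B = 1 + (\<Sum>\<beta>\<in>\<Phi>. norm \<beta>)"
  have B1: "B \<ge> 1" unfolding B_def by (simp add: sum_nonneg)
  have Bb: "\<And>\<beta>. \<beta> \<in> \<Phi> \<Longrightarrow> norm \<beta> \<le> B"
  proof -
    fix \<beta> assume "\<beta> \<in> \<Phi>"
    then have "norm \<beta> \<le> (\<Sum>\<beta>\<in>\<Phi>. norm \<beta>)"
      using member_le_sum[of \<beta> \<Phi> norm] root_fin by simp
    then show "norm \<beta> \<le> B" unfolding B_def by simp
  qed
  define S where "S = {L \<in> Lab \<Phi>. \<bar>snd L\<bar> \<le> (\<lambda>\<beta>. \<bar>q \<bullet> \<beta>\<bar> + 1) (fst L)}"
  have Sfin: "finite S" unfolding S_def by (rule Lab_bounded_fin)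
  define T where "T = S - {L0, negL L0}"
  have Tfin: "finite T" using Sfin by (simp add: T_def)
  have Tnz: "\<And>L. L \<in> T \<Longrightarrow> fL L q \<noteq> 0" using q by (auto simp: T_def S_def)
  define \<delta> where "\<delta> = Min (insert (1 / B) ((\<lambda>L. \<bar>fL L q\<bar> / B) ` T))"
  have \<delta>pos: "\<delta> > 0" unfolding \<delta>_def
    using Tfin B1 Tnz by (subst Min_gr_iff) auto
  have \<delta>1: "\<delta> \<le> 1 / B" unfolding \<delta>_def using Tfin by (intro Min_le) auto
  have \<delta>T: "\<And>L. L \<in> T \<Longrightarrow> \<delta> \<le> \<bar>fL L q\<bar> / B" unfolding \<delta>_def using Tfin by (intro Min_le) auto
  have "\<forall>v. dist v q < \<delta> \<longrightarrow>
           (\<forall>L\<in>Lab \<Phi>. L \<noteq> L0 \<and> L \<noteq> negL L0 \<longrightarrow> fL L v * fL L q > 0)"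
  proof (intro allI impI ballI)
    fix v L assume d: "dist v q < \<delta>" and L: "L \<in> Lab \<Phi>" and nL: "L \<noteq> L0 \<and> L \<noteq> negL L0"
    have bL: "fst L \<in> \<Phi>" using L by (auto simp: Lab_def)
    have "\<bar>fL L v - fL L q\<bar> = \<bar>(v - q) \<bullet> fst L\<bar>" by (simp add: fL_def inner_diff_left)
    also have "\<dots> \<le> norm (v - q) * norm (fst L)" by (rule Cauchy_Schwarz_ineq2)
    also have "\<dots> \<le> norm (v - q) * B" using Bb[OF bL] by (simp add: mult_left_mono)
    also have "\<dots> < \<delta> * B" using d B1 by (simp add: dist_norm)
    finally have diff: "\<bar>fL L v - fL L q\<bar> < \<delta> * B" .
    show "fL L v * fL L q > 0"
    proof (cases "L \<in> S")
      case True
      then have "L \<in> T" using nL by (simp add: T_def)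
      then have "\<delta> * B \<le> \<bar>fL L q\<bar>" using \<delta>T B1 by (simp add: le_divide_eq)
      then show ?thesis using diff same_sign_close by simp
    next
      case False
      then have "\<bar>snd L\<bar> > \<bar>q \<bullet> fst L\<bar> + 1" using L by (simp add: S_def)
      then have "\<bar>fL L q\<bar> > 1" by (simp add: fL_def)
      moreover have "\<delta> * B \<le> 1" using \<delta>1 B1 by (simp add: le_divide_eq)
      ultimately show ?thesis using diff same_sign_close by simp
    qed
  qed
  then show ?thesis using \<delta>pos by blast
qed

lemma wall_good:
  assumes L: "L \<in> Lab \<Phi>" and w: "wall \<Phi> \<xi> (hyp (fst L) (snd L))"
  shows "\<exists>c'\<in>C. NN \<Phi> c' (rl L c') = {L, negL L}"
proof -
  obtain q where q: "q \<in> closure C" "fL L q = 0" "\<forall>L'\<in>Lab \<Phi>. fL L' q = 0 \<longrightarrow> L' = L \<or> L' = negL L"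
    using wall_point[OF L w] by blast
  obtain \<delta> where \<delta>: "\<delta> > 0" "\<forall>v. dist v q < \<delta> \<longrightarrow>
           (\<forall>L'\<in>Lab \<Phi>. L' \<noteq> L \<and> L' \<noteq> negL L \<longrightarrow> fL L' v * fL L' q > 0)"
    using local_sign[OF L q(3)] by blast
  obtain c' where c': "c' \<in> C" "dist c' q < \<delta>" using q(1) \<delta>(1) by (auto simp: closure_approachable)
  have nz: "fst L \<noteq> 0" using Lab_nz[OF L] .
  have rq: "rl L q = q" using q(2) by (simp add: rl_apply)
  have "dist (rl L c') q = dist c' q"
    using refl_norm_dist[OF nz, of "snd L" c' q] rq by (simp add: dist_norm rl_def)
  then have d2: "dist (rl L c') q < \<delta>" using c' by simp
  have "NN \<Phi> c' (rl L c') = {L, negL L}"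
  proof
    show "NN \<Phi> c' (rl L c') \<subseteq> {L, negL L}"
    proof
      fix L' assume L': "L' \<in> NN \<Phi> c' (rl L c')"
      then have L'1: "L' \<in> Lab \<Phi>" "fL L' c' * fL L' (rl L c') < 0" by (auto simp: NN_def)
      show "L' \<in> {L, negL L}"
      proof (rule ccontr)
        assume "L' \<notin> {L, negL L}"
        then have "fL L' c' * fL L' q > 0" "fL L' (rl L c') * fL L' q > 0"
          using \<delta>(2) c'(2) d2 L'1(1) by auto
        then have "fL L' c' * fL L' (rl L c') > 0"
          by (auto simp: zero_less_mult_iff)
        then show False using L'1(2) by simp
      qed
    qed
    have a: "fL L c' \<noteq> 0" using C_nz[OF c'(1) L] .
    have sq: "fL L c' * fL L c' > 0" by (metis a not_real_square_gt_zero)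
    have "fL L c' * fL L (rl L c') < 0" using sq
      by (simp add: fL_rl_self[OF nz])
    moreover have "fL (negL L) c' * fL (negL L) (rl L c') < 0" using sq
      by (simp add: fL_neg fL_rl_self[OF nz])
    ultimately show "{L, negL L} \<subseteq> NN \<Phi> c' (rl L c')"
      using L Lab_neg[OF L] by (auto simp: NN_def)
  qed
  then show ?thesis using c' by blast
qed

lemma simple_good:
  assumes "s \<in> simples \<Phi> \<xi>"
  shows "\<exists>L\<in>Lab \<Phi>. s = rl L \<and> (\<exists>c'\<in>C. NN \<Phi> c' (rl L c') = {L, negL L})"
  using simples_Lab[OF assms] wall_good by blast

lemma NN_negL: "L \<in> NN \<Phi> p q \<Longrightarrow> negL L \<in> NN \<Phi> p q"
  by (auto simp: NN_def fL_neg Lab_neg)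

definition Nset :: "('a \<Rightarrow> 'a) \<Rightarrow> ('a \<times> real) set" where
  "Nset y = NN \<Phi> (c0 \<Phi> \<xi>) (y (c0 \<Phi> \<xi>))"

lemma Nset_eq: "y \<in> affW \<Phi> \<Longrightarrow> c \<in> C \<Longrightarrow> Nset y = NN \<Phi> c (y c)"
  unfolding Nset_def using NN_indep[of y c "c0 \<Phi> \<xi>"] c0_C by simp

lemma n2_Nset: "n2 \<Phi> \<xi> y = card (Nset y)"
  by (simp add: n2_def Nset_def)

lemma Nset_fin: "finite (Nset y)" by (simp add: Nset_def NN_fin)

lemma Nset_sub: "Nset y \<subseteq> Lab \<Phi>" by (simp add: Nset_def NN_sub)

lemma Nset_negL: "L \<in> Nset y \<Longrightarrow> negL L \<in> Nset y" by (simp add: Nset_def NN_negL)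

lemma pb_surj: "y \<in> affW \<Phi> \<Longrightarrow> L \<in> Lab \<Phi> \<Longrightarrow> \<exists>M\<in>Lab \<Phi>. pb y M = L"
  using pb_bij[of y] unfolding bij_betw_def by (metis imageE)

lemma pb_inj: "y \<in> affW \<Phi> \<Longrightarrow> M \<in> Lab \<Phi> \<Longrightarrow> M' \<in> Lab \<Phi> \<Longrightarrow> pb y M = pb y M' \<Longrightarrow> M = M'"
  using pb_bij[of y] by (auto simp: bij_betw_def inj_on_def)

lemma Nset_right:
  assumes y: "y \<in> affW \<Phi>" and Ls: "Ls \<in> Lab \<Phi>"
    and c': "c' \<in> C" and NNs: "NN \<Phi> c' (rl Ls c') = {Ls, negL Ls}"
    and M: "M \<in> Lab \<Phi>" "pb y M = Ls"
  shows "Nset (y \<circ> rl Ls) = (Nset y - {M, negL M}) \<union> ({M, negL M} - Nset y)"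
proof -
  have ys: "y \<circ> rl Ls \<in> affW \<Phi>" using affW_comp[OF y rl_affW[OF Ls]] .
  have e1: "Nset (y \<circ> rl Ls) = NN \<Phi> c' (y (rl Ls c'))" using Nset_eq[OF ys c'] by simp
  have e2: "Nset y = NN \<Phi> c' (y c')" using Nset_eq[OF y c'] .
  have rc: "rl Ls c' \<in> C \<or> True" by simp
  have key: "\<And>L. L \<in> Lab \<Phi> \<Longrightarrow>
      (L \<in> NN \<Phi> c' (y (rl Ls c'))) \<longleftrightarrow>
      ((L \<in> NN \<Phi> c' (y c')) \<noteq> (L \<in> {M, negL M}))"
  proof -
    fix L assume L: "L \<in> Lab \<Phi>"
    have pL: "pb y L \<in> Lab \<Phi>" using pb_Lab[OF y L] .
    have nz1: "fL L c' \<noteq> 0" using C_nz[OF c' L] .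
    have nz2: "fL L (y c') \<noteq> 0" using orbit_nz[OF y c' L] .
    have nz3: "fL L (y (rl Ls c')) \<noteq> 0"
      using orbit_nz[OF ys c' L] by simp
    have "(fL L (y c') * fL L (y (rl Ls c')) < 0) \<longleftrightarrow> pb y L \<in> NN \<Phi> c' (rl Ls c')"
      using pL by (simp add: NN_def pb_fL[OF y L])
    also have "\<dots> \<longleftrightarrow> (pb y L = Ls \<or> pb y L = negL Ls)" using NNs by simp
    also have "\<dots> \<longleftrightarrow> (L = M \<or> L = negL M)"
    proof -
      have "pb y (negL M) = negL Ls" using pb_neg[OF y M(1)] M(2) by simp
      then show ?thesis using pb_inj[OF y L] M Lab_neg by metis
    qed
    finally have "(fL L c' * fL L (y (rl Ls c')) < 0) \<longleftrightarrow>
      ((fL L c' * fL L (y c') < 0) \<noteq> (L = M \<or> L = negL M))"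
      using xor_sign[OF nz1 nz2 nz3] by simp
    then show "(L \<in> NN \<Phi> c' (y (rl Ls c'))) \<longleftrightarrow>
      ((L \<in> NN \<Phi> c' (y c')) \<noteq> (L \<in> {M, negL M}))"
      using L by (simp add: NN_def)
  qed
  have HML: "{M, negL M} \<subseteq> Lab \<Phi>" using M(1) Lab_neg[OF M(1)] by simp
  have "NN \<Phi> c' (y (rl Ls c')) = (NN \<Phi> c' (y c') - {M, negL M}) \<union> ({M, negL M} - NN \<Phi> c' (y c'))"
  proof (rule set_eqI)
    fix L
    show "(L \<in> NN \<Phi> c' (y (rl Ls c'))) = (L \<in> (NN \<Phi> c' (y c') - {M, negL M}) \<union> ({M, negL M} - NN \<Phi> c' (y c')))"
    proof (cases "L \<in> Lab \<Phi>")
      case True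
      then show ?thesis using key[OF True] by blast
    next
      case False
      then show ?thesis using HML NN_sub[of c' "y (rl Ls c')"] NN_sub[of c' "y c'"] by blast
    qed
  qed
  then show ?thesis unfolding e1 e2 .
qed

lemma card_symdiff2:
  assumes "finite A" "M \<noteq> M'" "M \<in> A \<longleftrightarrow> M' \<in> A"
  shows "card ((A - {M, M'}) \<union> ({M, M'} - A)) = (if M \<in> A then card A - 2 else card A + 2)"
proof (cases "M \<in> A")
  case True
  then have "(A - {M, M'}) \<union> ({M, M'} - A) = A - {M, M'}" using assms by auto
  moreover have "card (A - {M, M'}) = card A - 2"
    using True assms by (subst card_Diff_subset) auto
  ultimately show ?thesis using True by simp
next
  case False
  then have "(A - {M, M'}) \<union> ({M, M'} - A) = A \<union> {M, M'}" using assms by auto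
  moreover have "card (A \<union> {M, M'}) = card A + 2"
    using False assms by (subst card_Un_disjoint) auto
  ultimately show ?thesis using False by simp
qed

end

lemma bool4:
  assumes "sa' \<longrightarrow> sa" "sb \<longrightarrow> sb'"
  shows "(of_bool (sa \<noteq> sb') + of_bool (sa' \<noteq> sb) :: nat) \<le> of_bool (sa \<noteq> sb) + of_bool (sa' \<noteq> sb')"
  using assms by (cases sa; cases sb; cases sa'; cases sb') auto

lemma neg_prod_iff: "(a::real) \<noteq> 0 \<Longrightarrow> b \<noteq> 0 \<Longrightarrow> (a * b < 0) = ((a > 0) \<noteq> (b > 0))"
  by (auto simp: mult_less_0_iff)

lemma sign4:
  fixes a b a' b' X Y :: real
  assumes "a \<noteq> 0" "b \<noteq> 0" "a' \<noteq> 0" "b' \<noteq> 0" "a' = a - X" "b' = b - Y"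
    "(X \<ge> 0 \<and> Y \<le> 0) \<or> (X \<le> 0 \<and> Y \<ge> 0)"
  shows "(of_bool (a * b' < 0) + of_bool (a' * b < 0) :: nat) \<le> of_bool (a * b < 0) + of_bool (a' * b' < 0)"
proof -
  have e: "(a * b' < 0) = ((a > 0) \<noteq> (b' > 0))" "(a' * b < 0) = ((a' > 0) \<noteq> (b > 0))"
     "(a * b < 0) = ((a > 0) \<noteq> (b > 0))" "(a' * b' < 0) = ((a' > 0) \<noteq> (b' > 0))"
    using assms(1-4) by (simp_all add: neg_prod_iff)
  show ?thesis unfolding e
  proof (cases "X \<ge> 0 \<and> Y \<le> 0")
    case True
    then have "(a' > 0) \<longrightarrow> (a > 0)" "(b > 0) \<longrightarrow> (b' > 0)" using assms(5,6) by auto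
    then show "(of_bool ((a > 0) \<noteq> (b' > 0)) + of_bool ((a' > 0) \<noteq> (b > 0)) :: nat)
      \<le> of_bool ((a > 0) \<noteq> (b > 0)) + of_bool ((a' > 0) \<noteq> (b' > 0))"
      by (rule bool4)
  next
    case False
    then have "X \<le> 0 \<and> Y \<ge> 0" using assms(7) by auto
    then have "(a > 0) \<longrightarrow> (a' > 0)" "(b' > 0) \<longrightarrow> (b > 0)" using assms(5,6) by auto
    from bool4[OF this] show "(of_bool ((a > 0) \<noteq> (b' > 0)) + of_bool ((a' > 0) \<noteq> (b > 0)) :: nat)
      \<le> of_bool ((a > 0) \<noteq> (b > 0)) + of_bool ((a' > 0) \<noteq> (b' > 0))"
      by (simp add: ac_simps)
  qed
qed

lemma opp_prod:
  fixes gc gp l :: real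
  assumes "gc * gp < 0"
  shows "(l * gc \<ge> 0 \<and> l * gp \<le> 0) \<or> (l * gc \<le> 0 \<and> l * gp \<ge> 0)"
proof -
  have s: "(gc > 0 \<and> gp < 0) \<or> (gc < 0 \<and> gp > 0)" using assms by (auto simp: mult_less_0_iff)
  show ?thesis
  proof (cases "l \<ge> 0")
    case True
    then show ?thesis using s
      by (meson less_imp_le mult_nonneg_nonneg mult_nonneg_nonpos)
  next
    case False
    then have "l \<le> 0" by simp
    then show ?thesis using s
      by (meson less_imp_le mult_nonpos_nonneg mult_nonpos_nonpos)
  qed
qed

lemma card_ind:
  assumes "finite U" "X \<subseteq> U"
  shows "card X = (\<Sum>L\<in>U. of_bool (L \<in> X) :: nat)"
proof -
  have "(\<Sum>L\<in>U. of_bool (L \<in> X) :: nat) = (\<Sum>L\<in>U. if L \<in> X then 1 else 0)"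
    by (rule sum.cong) auto
  also have "\<dots> = (\<Sum>L\<in>U \<inter> X. (1::nat))"
    using sum.inter_restrict[OF assms(1), of "\<lambda>_. (1::nat)" X] by simp
  also have "U \<inter> X = X" using assms(2) by blast
  finally show ?thesis by simp
qed

context aws begin

lemma actL_image_card:
  assumes K: "K \<in> Lab \<Phi>" and A: "A \<subseteq> Lab \<Phi>"
  shows "card (actL K ` A) = card A"
proof -
  have "inj_on (actL K) (Lab \<Phi>)" using actL_bij[OF K] by (simp add: bij_betw_def)
  then have "inj_on (actL K) A" using A inj_on_subset by blast
  then show ?thesis by (rule card_image)
qed

lemma act_NN:
  assumes K: "K \<in> Lab \<Phi>"
  shows "NN \<Phi> (rl K p) (rl K q) = actL K ` NN \<Phi> p q"
proof -
  have nz: "fst K \<noteq> 0" using Lab_nz[OF K] .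
  have mem: "\<And>L. L \<in> NN \<Phi> (rl K p) (rl K q) \<longleftrightarrow> L \<in> Lab \<Phi> \<and> actL K L \<in> NN \<Phi> p q"
    using Lab_act[OF K] by (auto simp: NN_def fL_actL)
  show ?thesis
  proof (rule set_eqI)
    fix L
    show "L \<in> NN \<Phi> (rl K p) (rl K q) \<longleftrightarrow> L \<in> actL K ` NN \<Phi> p q"
    proof
      assume "L \<in> NN \<Phi> (rl K p) (rl K q)"
      then have "L \<in> Lab \<Phi>" "actL K L \<in> NN \<Phi> p q" using mem by auto
      then show "L \<in> actL K ` NN \<Phi> p q"
        using actL_invol[OF nz, of L] by (metis imageI)
    next
      assume "L \<in> actL K ` NN \<Phi> p q"
      then obtain L' where L': "L' \<in> NN \<Phi> p q" "L = actL K L'" by blast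
      then have "L' \<in> Lab \<Phi>" by (simp add: NN_def)
      then have "L \<in> Lab \<Phi>" "actL K L = L'" using L' Lab_act[OF K] actL_invol[OF nz] by auto
      then show "L \<in> NN \<Phi> (rl K p) (rl K q)" using mem L' by auto
    qed
  qed
qed

lemma refl_left_dec:
  assumes y: "y \<in> affW \<Phi>" and K: "K \<in> Lab \<Phi>" and KN: "K \<in> Nset y"
  shows "n2 \<Phi> \<xi> (rl K \<circ> y) + 2 \<le> n2 \<Phi> \<xi> y"
proof -
  define c where "c = c0 \<Phi> \<xi>"
  have c: "c \<in> C" using c0_C by (simp add: c_def)
  define r where "r = rl K"
  have nz: "fst K \<noteq> 0" using Lab_nz[OF K] .
  have ry: "r \<circ> y \<in> affW \<Phi>" unfolding r_def using affW_comp[OF rl_affW[OF K] y] .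
  define p where "p = y c"
  define A where "A = NN \<Phi> c (r p)"
  define B where "B = NN \<Phi> c p"
  define A' where "A' = NN \<Phi> (r c) p"
  define B' where "B' = NN \<Phi> (r c) (r p)"
  have nA: "n2 \<Phi> \<xi> (r \<circ> y) = card A" unfolding A_def p_def n2_def c_def by simp
  have nB: "n2 \<Phi> \<xi> y = card B" unfolding B_def p_def n2_def c_def by simp
  have rrp: "r (r p) = p" unfolding r_def using rl_invol[OF nz] by simp
  have A'eq: "A' = actL K ` A"
    unfolding A'_def A_def using act_NN[OF K, of c "r p"] rrp by (simp add: r_def)
  have B'eq: "B' = actL K ` B"
    unfolding B'_def B_def using act_NN[OF K, of c p] by (simp add: r_def)
  have AL: "A \<subseteq> Lab \<Phi>" "B \<subseteq> Lab \<Phi>" unfolding A_def B_def by (simp_all add: NN_sub)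
  have cA': "card A' = card A" using A'eq actL_image_card[OF K AL(1)] by simp
  have cB': "card B' = card B" using B'eq actL_image_card[OF K AL(2)] by simp
  define U where "U = A \<union> A' \<union> B \<union> B'"
  have Ufin: "finite U" unfolding U_def A_def A'_def B_def B'_def by (simp add: NN_fin)
  have subs: "A \<subseteq> U" "A' \<subseteq> U" "B \<subseteq> U" "B' \<subseteq> U" unfolding U_def by auto
  have UL: "U \<subseteq> Lab \<Phi>" unfolding U_def A_def A'_def B_def B'_def by (simp add: NN_sub)
  have KB: "K \<in> B" using KN unfolding B_def p_def c_def Nset_def by simp
  have nKB: "negL K \<in> B" using NN_negL KB unfolding B_def by blast
  have nzc: "\<And>L. L \<in> Lab \<Phi> \<Longrightarrow> fL L c \<noteq> 0" using C_nz[OF c] .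
  have nzp: "\<And>L. L \<in> Lab \<Phi> \<Longrightarrow> fL L p \<noteq> 0" unfolding p_def using orbit_nz[OF y c] .
  have nzrc: "\<And>L. L \<in> Lab \<Phi> \<Longrightarrow> fL L (r c) \<noteq> 0"
    unfolding r_def using orbit_nz[OF rl_affW[OF K] c] .
  have nzrp: "\<And>L. L \<in> Lab \<Phi> \<Longrightarrow> fL L (r p) \<noteq> 0"
    unfolding p_def using orbit_nz[OF ry c] by simp
  have Kprod: "fL K c * fL K p < 0" using KB by (simp add: B_def NN_def)
  have fKr: "\<And>v. fL K (r v) = - fL K v" unfolding r_def using fL_rl_self[OF nz] .
  have KK: "K \<notin> A" "K \<notin> A'" "K \<in> B'" "negL K \<notin> A" "negL K \<notin> A'" "negL K \<in> B'"
    using Kprod K Lab_neg[OF K]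
    by (auto simp: A_def A'_def B'_def NN_def fKr fL_neg)
  have KnK: "K \<noteq> negL K" using negL_neq[OF K] by simp
  have pw: "\<And>L. L \<in> U \<Longrightarrow>
     of_bool (L \<in> A) + of_bool (L \<in> A') + (if L \<in> {K, negL K} then 2 else 0)
       \<le> of_bool (L \<in> B) + (of_bool (L \<in> B') :: nat)"
  proof -
    fix L assume LU: "L \<in> U"
    have L: "L \<in> Lab \<Phi>" using LU UL by blast
    show "of_bool (L \<in> A) + of_bool (L \<in> A') + (if L \<in> {K, negL K} then 2 else 0)
       \<le> of_bool (L \<in> B) + (of_bool (L \<in> B') :: nat)"
    proof (cases "L \<in> {K, negL K}")
      case True
      then show ?thesis using KK KB nKB by auto
    next
      case False
      define lam where "lam = fst L \<bullet> coroot (fst K)"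
      have fr: "\<And>v. fL L (r v) = fL L v - lam * fL K v" unfolding r_def lam_def by (rule fL_rl)
      have memA: "(L \<in> A) = (fL L c * fL L (r p) < 0)" using L by (simp add: A_def NN_def)
      have memA': "(L \<in> A') = (fL L (r c) * fL L p < 0)" using L by (simp add: A'_def NN_def)
      have memB: "(L \<in> B) = (fL L c * fL L p < 0)" using L by (simp add: B_def NN_def)
      have memB': "(L \<in> B') = (fL L (r c) * fL L (r p) < 0)" using L by (simp add: B'_def NN_def)
      have sg: "(lam * fL K c \<ge> 0 \<and> lam * fL K p \<le> 0) \<or> (lam * fL K c \<le> 0 \<and> lam * fL K p \<ge> 0)"
        by (rule opp_prod[OF Kprod])
      have "(of_bool (fL L c * fL L (r p) < 0) + of_bool (fL L (r c) * fL L p < 0) :: nat)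
         \<le> of_bool (fL L c * fL L p < 0) + of_bool (fL L (r c) * fL L (r p) < 0)"
        by (rule sign4[OF nzc[OF L] nzp[OF L] nzrc[OF L] nzrp[OF L] fr[of c] fr[of p] sg])
      then show ?thesis using False memA memA' memB memB' by simp
    qed
  qed
  have "(\<Sum>L\<in>U. of_bool (L \<in> A) + of_bool (L \<in> A') + (if L \<in> {K, negL K} then 2 else 0))
      \<le> (\<Sum>L\<in>U. of_bool (L \<in> B) + (of_bool (L \<in> B') :: nat))"
    by (rule sum_mono) (rule pw)
  moreover have "(\<Sum>L\<in>U. of_bool (L \<in> A) + of_bool (L \<in> A') + (if L \<in> {K, negL K} then 2 else 0))
     = card A + card A' + (\<Sum>L\<in>U. (if L \<in> {K, negL K} then 2 else 0 :: nat))"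
    using card_ind[OF Ufin subs(1)] card_ind[OF Ufin subs(2)] by (simp add: sum.distrib)
  moreover have "(\<Sum>L\<in>U. of_bool (L \<in> B) + (of_bool (L \<in> B') :: nat)) = card B + card B'"
    using card_ind[OF Ufin subs(3)] card_ind[OF Ufin subs(4)] by (simp add: sum.distrib)
  moreover have "(\<Sum>L\<in>U. (if L \<in> {K, negL K} then 2 else 0 :: nat)) = 4"
  proof -
    have "(\<Sum>L\<in>U. (if L \<in> {K, negL K} then 2 else 0 :: nat)) = (\<Sum>L\<in>U \<inter> {K, negL K}. 2)"
      using sum.inter_restrict[OF Ufin, of "\<lambda>_. (2::nat)" "{K, negL K}"] by simp
    also have "U \<inter> {K, negL K} = {K, negL K}" using KB nKB by (auto simp: U_def)
    finally show ?thesis using KnK by simp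
  qed
  ultimately have "card A + card A' + 4 \<le> card B + card B'" by simp
  then have "card A + 2 \<le> card B" using cA' cB' by simp
  then show ?thesis using nA nB by (simp add: r_def)
qed

lemma refl_left_inc:
  assumes y: "y \<in> affW \<Phi>" and K: "K \<in> Lab \<Phi>" and KN: "K \<notin> Nset y"
  shows "n2 \<Phi> \<xi> y + 2 \<le> n2 \<Phi> \<xi> (rl K \<circ> y)"
proof -
  have nz: "fst K \<noteq> 0" using Lab_nz[OF K] .
  define c where "c = c0 \<Phi> \<xi>"
  have c: "c \<in> C" using c0_C by (simp add: c_def)
  have ry: "rl K \<circ> y \<in> affW \<Phi>" using affW_comp[OF rl_affW[OF K] y] .
  have "\<not> fL K c * fL K (y c) < 0" using KN K by (simp add: Nset_def NN_def c_def)
  moreover have "fL K c * fL K (y c) \<noteq> 0" using C_nz[OF c K] orbit_nz[OF y c K] by simp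
  ultimately have "fL K c * fL K (y c) > 0" by linarith
  then have "fL K c * fL K (rl K (y c)) < 0"
    by (simp add: fL_rl_self[OF nz])
  then have "K \<in> Nset (rl K \<circ> y)" using K by (simp add: Nset_def NN_def c_def)
  from refl_left_dec[OF ry K this] show ?thesis
    using rl_invol[OF nz] by (simp add: comp_def)
qed

end

lemma fL_seg: "fL L (c + s *\<^sub>R (p - c)) = fL L c + s * (fL L p - fL L c)"
  by (simp add: fL_def inner_add_left inner_diff_left algebra_simps)

lemma seg_t_range:
  fixes a b :: real
  assumes "a * b < 0"
  shows "0 < a / (a - b)" "a / (a - b) < 1"
proof -
  have "(a > 0 \<and> b < 0) \<or> (a < 0 \<and> b > 0)" using assms by (auto simp: mult_less_0_iff)
  then show "0 < a / (a - b)" "a / (a - b) < 1"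
    by (auto simp: divide_less_eq zero_less_divide_iff)
qed

lemma seg_sign_before:
  fixes a b s :: real
  assumes "a * b < 0" "0 \<le> s" "s < a / (a - b)"
  shows "(a + s * (b - a)) * a > 0"
proof -
  have "(a > 0 \<and> b < 0) \<or> (a < 0 \<and> b > 0)" using assms by (auto simp: mult_less_0_iff)
  then show ?thesis
  proof
    assume h: "a > 0 \<and> b < 0"
    then have "s * (a - b) < a" using assms(3) by (simp add: less_divide_eq)
    then have "a + s * (b - a) > 0" by (simp add: algebra_simps)
    then show ?thesis using h by simp
  next
    assume h: "a < 0 \<and> b > 0"
    then have "a < s * (a - b)" using assms(3) by (simp add: less_divide_eq)
    then have "a + s * (b - a) < 0" by (simp add: algebra_simps)
    then show ?thesis using h by (simp add: mult_neg_neg)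
  qed
qed

lemma seg_sign_same:
  fixes a b s :: real
  assumes "a * b > 0" "0 \<le> s" "s \<le> 1"
  shows "(a + s * (b - a)) * a > 0"
proof -
  have e: "a + s * (b - a) = (1 - s) * a + s * b" by (simp add: algebra_simps)
  have "(a > 0 \<and> b > 0) \<or> (a < 0 \<and> b < 0)" using assms by (auto simp: zero_less_mult_iff)
  then show ?thesis
  proof
    assume h: "a > 0 \<and> b > 0"
    have "(1 - s) * a \<ge> 0" "s * b \<ge> 0" using h assms by auto
    moreover have "(1 - s) * a > 0 \<or> s * b > 0" using h assms by (cases "s = 1") auto
    ultimately have "(1 - s) * a + s * b > 0" by linarith
    then show ?thesis using e h by simp
  next
    assume h: "a < 0 \<and> b < 0"
    have "(1 - s) * a \<le> 0" "s * b \<le> 0" using h assms by (auto simp: mult_nonneg_nonpos)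
    moreover have "(1 - s) * a < 0 \<or> s * b < 0" using h assms
      by (cases "s = 1") (auto simp: mult_pos_neg)
    ultimately have "(1 - s) * a + s * b < 0" by linarith
    then show ?thesis using e h by (simp add: mult_neg_neg)
  qed
qed

lemma seg_zero:
  fixes a b s :: real
  assumes "a \<noteq> b" "a + s * (b - a) = 0"
  shows "s = a / (a - b)"
proof -
  have "a - b \<noteq> 0" using assms by simp
  moreover have "s * (a - b) = a" using assms(2) by (simp add: algebra_simps)
  ultimately show ?thesis by (simp add: eq_divide_eq)
qed

lemma t_eq_cross:
  fixes a1 b1 a2 b2 :: real
  assumes "a1 * b1 < 0" "a2 * b2 < 0" "a1 / (a1 - b1) = a2 / (a2 - b2)"
  shows "b1 * a2 - b2 * a1 = 0"
proof -
  have "a1 - b1 \<noteq> 0" "a2 - b2 \<noteq> 0" using assms(1,2) by auto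
  then have "a1 * (a2 - b2) = a2 * (a1 - b1)" using assms(3) by (simp add: frac_eq_eq)
  then show ?thesis by (simp add: algebra_simps)
qed

context aws begin

definition Gv :: "'a \<Rightarrow> ('a \<times> real) \<Rightarrow> ('a \<times> real) \<Rightarrow> 'a" where
  "Gv p L1 L2 = fL L1 p *\<^sub>R fst L2 - fL L2 p *\<^sub>R fst L1"
definition Ge :: "'a \<Rightarrow> ('a \<times> real) \<Rightarrow> ('a \<times> real) \<Rightarrow> real" where
  "Ge p L1 L2 = fL L1 p * snd L2 - fL L2 p * snd L1"

lemma G_eq: "fL L1 p * fL L2 c - fL L2 p * fL L1 c = Gv p L1 L2 \<bullet> c - Ge p L1 L2"
  by (simp add: Gv_def Ge_def fL_def inner_diff_left algebra_simps inner_commute)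

lemma Gv_nz:
  assumes L1: "L1 \<in> Lab \<Phi>" and L2: "L2 \<in> Lab \<Phi>" and n: "L2 \<noteq> L1" "L2 \<noteq> negL L1"
    and p1: "fL L1 p \<noteq> 0"
  shows "Gv p L1 L2 \<noteq> 0"
proof
  assume G0: "Gv p L1 L2 = 0"
  define \<mu> where "\<mu> = fL L2 p / fL L1 p"
  have "fL L1 p *\<^sub>R fst L2 = fL L2 p *\<^sub>R fst L1" using G0 by (simp add: Gv_def)
  then have b2: "fst L2 = \<mu> *\<^sub>R fst L1" using p1
    by (metis \<mu>_def divide_inverse_commute real_vector.scale_scale inverse_eq_divide
        scaleR_left_commute right_inverse scaleR_one)
  have "fst L1 \<in> \<Phi>" "fst L2 \<in> \<Phi>" using L1 L2 by (auto simp: Lab_def)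
  then have mu: "\<mu> = 1 \<or> \<mu> = -1" using root_reduced b2 by simp
  have "fL L2 p = \<mu> * fL L1 p" using p1 by (simp add: \<mu>_def)
  then have "p \<bullet> fst L2 - snd L2 = \<mu> * (p \<bullet> fst L1 - snd L1)" by (simp add: fL_def)
  then have "snd L2 = \<mu> * snd L1" using b2 by (simp add: algebra_simps)
  then show False using mu b2 n by (auto simp: negL_def prod_eq_iff)
qed

lemma exists_wall_sep:
  assumes y: "y \<in> affW \<Phi>" and ne: "Nset y \<noteq> {}"
  shows "\<exists>L1\<in>Nset y. wall \<Phi> \<xi> (hyp (fst L1) (snd L1))"
proof -
  define p where "p = y (c0 \<Phi> \<xi>)"
  define F where "F = Nset y"
  have Ffin: "finite F" unfolding F_def by (rule Nset_fin)
  have FL: "F \<subseteq> Lab \<Phi>" unfolding F_def by (rule Nset_sub)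
  have pnz: "\<And>L. L \<in> Lab \<Phi> \<Longrightarrow> fL L p \<noteq> 0" unfolding p_def using orbit_nz[OF y c0_C] .
  have FC: "\<And>c. c \<in> C \<Longrightarrow> F = NN \<Phi> c p"
  proof -
    fix c assume c: "c \<in> C"
    have "\<And>L. L \<in> Lab \<Phi> \<Longrightarrow> (fL L (c0 \<Phi> \<xi>) * fL L p < 0) = (fL L c * fL L p < 0)"
    proof -
      fix L assume L: "L \<in> Lab \<Phi>"
      have "fL L p * fL L p > 0" using pnz[OF L] by (metis not_real_square_gt_zero)
      then show "(fL L (c0 \<Phi> \<xi>) * fL L p < 0) = (fL L c * fL L p < 0)"
        by (rule sign_transfer[OF C_sign[OF c0_C c L]])
    qed
    then show "F = NN \<Phi> c p" unfolding F_def Nset_def p_def NN_def by auto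
  qed
  define BP where "BP = {P \<in> F \<times> F. snd P \<noteq> fst P \<and> snd P \<noteq> negL (fst P)}"
  define Z where "Z = (\<lambda>P. {x. Gv p (fst P) (snd P) \<bullet> x = Ge p (fst P) (snd P)})"
  have BPfin: "finite BP" unfolding BP_def using Ffin by simp
  have negZ: "negligible (\<Union>(Z ` BP))"
  proof (rule negligible_Union)
    show "finite (Z ` BP)" using BPfin by simp
    fix T assume "T \<in> Z ` BP"
    then obtain P where P: "P \<in> BP" "T = Z P" by blast
    have "Gv p (fst P) (snd P) \<noteq> 0"
      using P(1) FL pnz by (intro Gv_nz) (auto simp: BP_def)
    then show "negligible T" unfolding P(2) Z_def by (intro negligible_hyperplane) simp
  qed
  have "\<not> C \<subseteq> \<Union>(Z ` BP)"
  proof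
    assume "C \<subseteq> \<Union>(Z ` BP)"
    then have "negligible C" using negZ negligible_subset by blast
    moreover have "C \<noteq> {}" using C_ne by blast
    ultimately show False using open_not_negligible[OF C_open] by blast
  qed
  then obtain c where c: "c \<in> C" "c \<notin> \<Union>(Z ` BP)" by blast
  have F_NN: "F = NN \<Phi> c p" using FC[OF c(1)] .
  have cnz: "\<And>L. L \<in> Lab \<Phi> \<Longrightarrow> fL L c \<noteq> 0" using C_nz[OF c(1)] .
  define t where "t = (\<lambda>L. fL L c / (fL L c - fL L p))"
  have Fprod: "\<And>L. L \<in> F \<Longrightarrow> fL L c * fL L p < 0" using F_NN by (simp add: NN_def)
  have Fne: "F \<noteq> {}" using ne by (simp add: F_def)
  define m where "m = Min (t ` F)"
  have "m \<in> t ` F" unfolding m_def using Ffin Fne by (intro Min_in) auto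
  then obtain L1 where L1: "L1 \<in> F" "t L1 = m" by blast
  have mle: "\<And>L. L \<in> F \<Longrightarrow> m \<le> t L" unfolding m_def using Ffin by (intro Min_le) auto
  have L1Lab: "L1 \<in> Lab \<Phi>" using L1 FL by blast
  have m01: "0 < m" "m < 1" using seg_t_range[OF Fprod[OF L1(1)]] L1(2) by (simp_all add: t_def)
  define q where "q = c + m *\<^sub>R (p - c)"
  have fq: "\<And>L. fL L q = fL L c + m * (fL L p - fL L c)" unfolding q_def by (rule fL_seg)
  have L1q: "fL L1 q = 0"
  proof -
    have "fL L1 c - fL L1 p \<noteq> 0" using Fprod[OF L1(1)] by auto
    then show ?thesis unfolding fq L1(2)[symmetric] t_def by (simp add: field_simps)
  qed
  have only: "\<forall>L\<in>Lab \<Phi>. fL L q = 0 \<longrightarrow> L = L1 \<or> L = negL L1"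
  proof (intro ballI impI)
    fix L assume L: "L \<in> Lab \<Phi>" and z: "fL L q = 0"
    show "L = L1 \<or> L = negL L1"
    proof (cases "L \<in> F")
      case True
      have "fL L c \<noteq> fL L p" using Fprod[OF True] by auto
      then have "m = t L" using seg_zero z fq unfolding t_def by simp
      then have "t L1 = t L" using L1(2) by simp
      then have "fL L1 p * fL L c - fL L p * fL L1 c = 0"
        using t_eq_cross[OF Fprod[OF L1(1)] Fprod[OF True]] unfolding t_def by simp
      then have "c \<in> Z (L1, L)" unfolding Z_def using G_eq[of L1 p L c] by simp
      then have "(L1, L) \<notin> BP" using c(2) by blast
      then show ?thesis using True L1(1) by (auto simp: BP_def)
    next
      case False
      then have "\<not> fL L c * fL L p < 0" using F_NN L by (simp add: NN_def)
      moreover have "fL L c * fL L p \<noteq> 0" using cnz[OF L] pnz[OF L] by simp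
      ultimately have "fL L c * fL L p > 0" by linarith
      then have "(fL L c + m * (fL L p - fL L c)) * fL L c > 0"
        using seg_sign_same m01 by simp
      then show ?thesis using z fq by simp
    qed
  qed
  have qcl: "q \<in> closure C"
    unfolding closure_approachable
  proof (intro allI impI)
    fix e :: real assume e: "e > 0"
    define N where "N = norm (p - c) + 1"
    have N: "N > 0" "norm (p - c) < N" unfolding N_def using norm_ge_zero[of "p - c"] by linarith+
    define d where "d = min (m / 2) (e / (2 * N))"
    have d: "0 < d" "d \<le> m / 2" "d \<le> e / (2 * N)" using m01 e N by (auto simp: d_def)
    define s where "s = m - d"
    have s: "0 \<le> s" "s < m" using d by (auto simp: s_def)
    define x where "x = c + s *\<^sub>R (p - c)"
    have "x \<in> C"
    proof (rule C_charI[OF c(1)], intro ballI)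
      fix L assume L: "L \<in> Lab \<Phi>"
      have fx: "fL L x = fL L c + s * (fL L p - fL L c)" unfolding x_def by (rule fL_seg)
      show "fL L x * fL L c > 0"
      proof (cases "L \<in> F")
        case True
        have "s < t L" using s mle[OF True] by simp
        then show ?thesis unfolding fx using seg_sign_before[OF Fprod[OF True] s(1)]
          by (simp add: t_def)
      next
        case False
        then have "\<not> fL L c * fL L p < 0" using F_NN L by (simp add: NN_def)
        moreover have "fL L c * fL L p \<noteq> 0" using cnz[OF L] pnz[OF L] by simp
        ultimately have "fL L c * fL L p > 0" by linarith
        then show ?thesis unfolding fx using seg_sign_same s m01 by simp
      qed
    qed
    moreover have "dist x q < e"
    proof -
      have "x - q = (s - m) *\<^sub>R (p - c)" unfolding x_def q_def by (simp add: algebra_simps)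
      then have "dist x q = d * norm (p - c)" using d(1) by (simp add: dist_norm s_def)
      also have "\<dots> \<le> d * N" using d N by (simp add: mult_left_mono)
      also have "\<dots> \<le> e / 2" using d N by (simp add: le_divide_eq field_simps)
      also have "\<dots> < e" using e by simp
      finally show ?thesis .
    qed
    ultimately show "\<exists>x\<in>C. dist x q < e" by blast
  qed
  have "wall \<Phi> \<xi> (hyp (fst L1) (snd L1))"
    unfolding wall_def
  proof (intro conjI bexI)
    show "hyp (fst L1) (snd L1) \<in> hyps \<Phi>" using Lab_hyps[OF L1Lab] .
    show "q \<in> closure C \<inter> hyp (fst L1) (snd L1)" using qcl L1q by (simp add: fL_zero_hyp)
    show "\<forall>H'\<in>hyps \<Phi>. q \<in> H' \<longrightarrow> H' = hyp (fst L1) (snd L1)"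
    proof (intro ballI impI)
      fix H' assume H': "H' \<in> hyps \<Phi>" "q \<in> H'"
      obtain L' where L': "L' \<in> Lab \<Phi>" "H' = hyp (fst L') (snd L')" using hyps_Lab[OF H'(1)] by blast
      then have "fL L' q = 0" using H'(2) by (simp add: fL_zero_hyp)
      then have "L' = L1 \<or> L' = negL L1" using only L'(1) by blast
      then show "H' = hyp (fst L1) (snd L1)" using L'(2) hyp_negL[of L1] by metis
    qed
  qed
  then show ?thesis using L1(1) by (auto simp: F_def)
qed

end

definition inW :: "'a::euclidean_space set \<Rightarrow> 'a \<Rightarrow> ('a \<Rightarrow> 'a) \<Rightarrow> bool" where
  "inW \<Phi> \<xi> w \<longleftrightarrow> (\<exists>xs. set xs \<subseteq> simples \<Phi> \<xi> \<and> foldr (\<circ>) xs id = w)"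

lemma foldr_comp_append: "foldr (\<circ>) (xs @ ys) id = foldr (\<circ>) xs id \<circ> foldr (\<circ>) ys id"
  by (induction xs) (simp_all add: comp_assoc)

lemma inW_comp: "inW \<Phi> \<xi> a \<Longrightarrow> inW \<Phi> \<xi> b \<Longrightarrow> inW \<Phi> \<xi> (a \<circ> b)"
proof -
  assume "inW \<Phi> \<xi> a" "inW \<Phi> \<xi> b"
  then obtain xs ys where "set xs \<subseteq> simples \<Phi> \<xi>" "foldr (\<circ>) xs id = a"
    "set ys \<subseteq> simples \<Phi> \<xi>" "foldr (\<circ>) ys id = b" by (auto simp: inW_def)
  then show ?thesis unfolding inW_def
    by (intro exI[of _ "xs @ ys"]) (auto simp del: foldr_append simp add: foldr_comp_append)
qed

lemma inW_simple: "s \<in> simples \<Phi> \<xi> \<Longrightarrow> inW \<Phi> \<xi> s"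
  unfolding inW_def by (intro exI[of _ "[s]"]) simp

lemma inW_id: "inW \<Phi> \<xi> id"
  unfolding inW_def by (intro exI[of _ "[]"]) simp

lemma NN_sym: "NN \<Phi> p q = NN \<Phi> q p"
  by (auto simp: NN_def mult.commute)

context aws begin

lemma rl_simple: "L \<in> Lab \<Phi> \<Longrightarrow> wall \<Phi> \<xi> (hyp (fst L) (snd L)) \<Longrightarrow> rl L \<in> simples \<Phi> \<xi>"
proof -
  assume L: "L \<in> Lab \<Phi>" and w: "wall \<Phi> \<xi> (hyp (fst L) (snd L))"
  then obtain \<beta> i where "L = (\<beta>, of_int i)" "\<beta> \<in> \<Phi>" by (auto simp: Lab_def elim!: Ints_cases)
  then show ?thesis using w unfolding simples_def rl_def by auto
qed

lemma simple_Lab: "s \<in> simples \<Phi> \<xi> \<Longrightarrow> \<exists>L\<in>Lab \<Phi>. s = rl L"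
  using simples_Lab by blast

lemma simple_affW: "s \<in> simples \<Phi> \<xi> \<Longrightarrow> s \<in> affW \<Phi>"
  using simple_Lab rl_affW by blast

lemma K_in_Nset: "K \<in> Lab \<Phi> \<Longrightarrow> K \<in> Nset (rl K)"
proof -
  assume K: "K \<in> Lab \<Phi>"
  have a: "fL K (c0 \<Phi> \<xi>) \<noteq> 0" using C_nz[OF c0_C K] .
  have "fL K (c0 \<Phi> \<xi>) * fL K (c0 \<Phi> \<xi>) > 0" by (metis a not_real_square_gt_zero)
  then show ?thesis using K by (simp add: Nset_def NN_def fL_rl_self[OF Lab_nz[OF K]])
qed

lemma Nset_rl_inv: "K \<in> Lab \<Phi> \<Longrightarrow> Nset (rl K) = actL K ` Nset (rl K)"
proof -
  assume K: "K \<in> Lab \<Phi>"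
  define c where "c = c0 \<Phi> \<xi>"
  have "NN \<Phi> (rl K c) (rl K (rl K c)) = actL K ` NN \<Phi> c (rl K c)" by (rule act_NN[OF K])
  then have "NN \<Phi> c (rl K c) = actL K ` NN \<Phi> c (rl K c)"
    using rl_invol[OF Lab_nz[OF K]] NN_sym by metis
  then show ?thesis by (simp add: Nset_def c_def)
qed

lemma actL_fix_notin:
  assumes K: "K \<in> Lab \<Phi>" and L: "L \<in> Lab \<Phi>" and e: "actL K L = L"
  shows "L \<notin> Nset (rl K)"
proof -
  have "fL L (rl K (c0 \<Phi> \<xi>)) = fL L (c0 \<Phi> \<xi>)" using fL_actL[of L K] e by simp
  moreover have "fL L (c0 \<Phi> \<xi>) * fL L (c0 \<Phi> \<xi>) > 0"
    by (metis C_nz[OF c0_C L] not_real_square_gt_zero)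
  ultimately show ?thesis by (simp add: Nset_def NN_def)
qed

lemma actL_neg_fix:
  assumes K: "K \<in> Lab \<Phi>" and L: "L \<in> Lab \<Phi>" and e: "actL K L = negL L"
  shows "L = K \<or> L = negL K"
proof -
  define lam where "lam = fst L \<bullet> coroot (fst K)"
  have h: "\<And>v. 2 * fL L v = lam * fL K v"
  proof -
    fix v
    have "fL L (rl K v) = - fL L v" using fL_actL[of L K v] e by (simp add: fL_neg)
    moreover have "fL L (rl K v) = fL L v - lam * fL K v" unfolding lam_def by (rule fL_rl)
    ultimately show "2 * fL L v = lam * fL K v" by simp
  qed
  have "lam \<noteq> 0"
  proof
    assume "lam = 0"
    then have "fL L (c0 \<Phi> \<xi>) = 0" using h[of "c0 \<Phi> \<xi>"] by simp
    then show False using C_nz[OF c0_C L] by simp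
  qed
  then have "\<And>v. fL L v = 0 \<longleftrightarrow> fL K v = 0" using h by (metis mult_eq_0_iff zero_neq_numeral)
  then have "hyp (fst L) (snd L) = hyp (fst K) (snd K)" by (auto simp: fL_zero_hyp)
  then have "K = L \<or> K = negL L" using hyp_eq[OF L K] by simp
  then show ?thesis using negL_negL by metis
qed

lemma refl_inW: "K \<in> Lab \<Phi> \<Longrightarrow> inW \<Phi> \<xi> (rl K)"
proof (induction "n2 \<Phi> \<xi> (rl K)" arbitrary: K rule: less_induct)
  case less
  have K: "K \<in> Lab \<Phi>" by fact
  define y where "y = rl K"
  have y: "y \<in> affW \<Phi>" unfolding y_def using rl_affW[OF K] .
  have KN: "K \<in> Nset y" unfolding y_def using K_in_Nset[OF K] .
  obtain L1 where L1: "L1 \<in> Nset y" "wall \<Phi> \<xi> (hyp (fst L1) (snd L1))"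
    using exists_wall_sep[OF y] KN by blast
  have L1Lab: "L1 \<in> Lab \<Phi>" using L1(1) Nset_sub by blast
  have s: "rl L1 \<in> simples \<Phi> \<xi>" using rl_simple[OF L1Lab L1(2)] .
  show ?case
  proof (cases "L1 = K \<or> L1 = negL K")
    case True
    then have "rl K = rl L1" using rl_neg by metis
    then show ?thesis using inW_simple[OF s] by simp
  next
    case False
    define M where "M = actL K L1"
    have HM: "M \<in> Lab \<Phi>" unfolding M_def using Lab_act[OF K L1Lab] .
    have pbM: "pb y M = L1" unfolding y_def M_def pb_rl using actL_invol[OF Lab_nz[OF K]] by simp
    obtain c' where c': "c' \<in> C" "NN \<Phi> c' (rl L1 c') = {L1, negL L1}"
      using wall_good[OF L1Lab L1(2)] by blast
    have Ns: "Nset (y \<circ> rl L1) = (Nset y - {M, negL M}) \<union> ({M, negL M} - Nset y)"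
      by (rule Nset_right[OF y L1Lab c' HM pbM])
    have MN: "M \<in> Nset y" unfolding M_def y_def
      using Nset_rl_inv[OF K] L1(1) unfolding y_def by (metis imageI)
    have nMN: "negL M \<in> Nset y" using Nset_negL[OF MN] .
    have Ns2: "Nset (y \<circ> rl L1) = Nset y - {M, negL M}" using Ns MN nMN by blast
    have "L1 \<noteq> M"
    proof
      assume "L1 = M"
      then have "actL K L1 = L1" by (simp add: M_def)
      then show False using actL_fix_notin[OF K L1Lab] L1(1) by (simp add: y_def)
    qed
    moreover have "L1 \<noteq> negL M"
    proof
      assume "L1 = negL M"
      then have "actL K L1 = negL L1" using negL_negL by (metis M_def)
      then show False using actL_neg_fix[OF K L1Lab] False by simp
    qed
    ultimately have L1N: "L1 \<in> Nset (y \<circ> rl L1)" using Ns2 L1(1) by blast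
    have ys: "y \<circ> rl L1 \<in> affW \<Phi>" using affW_comp[OF y rl_affW[OF L1Lab]] .
    have d1: "n2 \<Phi> \<xi> (rl L1 \<circ> (y \<circ> rl L1)) + 2 \<le> n2 \<Phi> \<xi> (y \<circ> rl L1)"
      by (rule refl_left_dec[OF ys L1Lab L1N])
    have d2: "n2 \<Phi> \<xi> (y \<circ> rl L1) \<le> n2 \<Phi> \<xi> y"
      unfolding n2_Nset Ns2 using Nset_fin by (intro card_mono) auto
    have eqc: "rl L1 \<circ> (y \<circ> rl L1) = rl (actL L1 K)"
      unfolding y_def using rl_conj[OF Lab_nz[OF L1Lab], of K] by (simp add: fun_eq_iff)
    have lt: "n2 \<Phi> \<xi> (rl (actL L1 K)) < n2 \<Phi> \<xi> (rl K)" using d1 d2 eqc y_def by simp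
    have AK: "actL L1 K \<in> Lab \<Phi>" using Lab_act[OF L1Lab K] .
    have IH: "inW \<Phi> \<xi> (rl (actL L1 K))" using less.hyps[OF lt AK] .
    have "rl K = rl L1 \<circ> rl (actL L1 K) \<circ> rl L1"
      using eqc rl_invol[OF Lab_nz[OF L1Lab]] unfolding y_def by (simp add: fun_eq_iff) metis
    then show ?thesis using inW_comp[OF inW_comp[OF inW_simple[OF s] IH] inW_simple[OF s]] by simp
  qed
qed

lemma affW_inW: "w \<in> affW \<Phi> \<Longrightarrow> inW \<Phi> \<xi> w"
proof (induction w rule: affW.induct)
  case id_in then show ?case by (rule inW_id)
next
  case (step r w)
  then obtain K where K: "K \<in> Lab \<Phi>" "r = rl K" by (auto simp: affrefls_Lab)
  have "inW \<Phi> \<xi> (rl K \<circ> w)" using inW_comp[OF refl_inW[OF K(1)] step.IH] .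
  then show ?case using K(2) by (simp add: comp_def)
qed

end

context aws begin

lemma Nset_id: "Nset id = {}"
proof -
  have "\<And>L. L \<in> Lab \<Phi> \<Longrightarrow> \<not> fL L (c0 \<Phi> \<xi>) * fL L (c0 \<Phi> \<xi>) < 0"
  proof -
    fix L assume L: "L \<in> Lab \<Phi>"
    have "fL L (c0 \<Phi> \<xi>) * fL L (c0 \<Phi> \<xi>) > 0"
      using C_nz[OF c0_C L] not_real_square_gt_zero by blast
    then show "\<not> fL L (c0 \<Phi> \<xi>) * fL L (c0 \<Phi> \<xi>) < 0" by simp
  qed
  then show ?thesis by (auto simp: Nset_def NN_def)
qed

lemma n2_id: "n2 \<Phi> \<xi> id = 0"
  by (simp add: n2_Nset Nset_id)

lemma n2_id': "n2 \<Phi> \<xi> (\<lambda>x. x) = 0"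
  using n2_id by (simp add: id_def)

lemma Nset_id': "Nset (\<lambda>x. x) = {}"
  using Nset_id by (simp add: id_def)

lemma affW_id': "(\<lambda>x. x) \<in> affW \<Phi>"
  using affW.id_in by (simp add: id_def)

lemma card2_le: "finite A \<Longrightarrow> M \<in> A \<Longrightarrow> M' \<in> A \<Longrightarrow> M \<noteq> M' \<Longrightarrow> 2 \<le> card A"
proof -
  assume a: "finite A" "M \<in> A" "M' \<in> A" "M \<noteq> M'"
  then have "card {M, M'} \<le> card A" by (intro card_mono) auto
  then show ?thesis using a(4) by simp
qed

lemma right_step:
  assumes y: "y \<in> affW \<Phi>" and s: "s \<in> simples \<Phi> \<xi>"
  shows "\<exists>M\<in>Lab \<Phi>. rl M \<circ> y = y \<circ> s \<and>
     Nset (y \<circ> s) = (Nset y - {M, negL M}) \<union> ({M, negL M} - Nset y) \<and>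
     n2 \<Phi> \<xi> (y \<circ> s) = (if M \<in> Nset y then n2 \<Phi> \<xi> y - 2 else n2 \<Phi> \<xi> y + 2) \<and>
     (M \<in> Nset y \<longrightarrow> n2 \<Phi> \<xi> (y \<circ> s) < n2 \<Phi> \<xi> y)"
proof -
  obtain Ls where Ls: "Ls \<in> Lab \<Phi>" "s = rl Ls" "\<exists>c'\<in>C. NN \<Phi> c' (rl Ls c') = {Ls, negL Ls}"
    using simple_good[OF s] by blast
  obtain c' where c': "c' \<in> C" "NN \<Phi> c' (rl Ls c') = {Ls, negL Ls}" using Ls(3) by blast
  obtain M where M: "M \<in> Lab \<Phi>" "pb y M = Ls" using pb_surj[OF y Ls(1)] by blast
  have comm: "rl M \<circ> y = y \<circ> s" using rl_pb_comm[OF y M(1)] M(2) Ls(2) by simp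
  have Ns: "Nset (y \<circ> s) = (Nset y - {M, negL M}) \<union> ({M, negL M} - Nset y)"
    using Nset_right[OF y Ls(1) c' M] Ls(2) by simp
  have mm: "M \<noteq> negL M" using negL_neq[OF M(1)] by simp
  have iff: "M \<in> Nset y \<longleftrightarrow> negL M \<in> Nset y" using Nset_negL negL_negL by metis
  have cd: "card (Nset (y \<circ> s)) = (if M \<in> Nset y then card (Nset y) - 2 else card (Nset y) + 2)"
    unfolding Ns by (rule card_symdiff2[OF Nset_fin mm iff])
  have c2: "M \<in> Nset y \<longrightarrow> 2 \<le> card (Nset y)"
  proof
    assume "M \<in> Nset y"
    then show "2 \<le> card (Nset y)" using card2_le[OF Nset_fin _ _ mm] iff by simp
  qed
  have n2e: "n2 \<Phi> \<xi> (y \<circ> s) = (if M \<in> Nset y then n2 \<Phi> \<xi> y - 2 else n2 \<Phi> \<xi> y + 2)"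
    using cd by (simp only: n2_Nset)
  have lt: "M \<in> Nset y \<longrightarrow> n2 \<Phi> \<xi> (y \<circ> s) < n2 \<Phi> \<xi> y"
  proof
    assume a: "M \<in> Nset y"
    then have "2 \<le> n2 \<Phi> \<xi> y" using c2 by (simp add: n2_Nset)
    moreover have "n2 \<Phi> \<xi> (y \<circ> s) = n2 \<Phi> \<xi> y - 2" using n2e a by simp
    ultimately show "n2 \<Phi> \<xi> (y \<circ> s) < n2 \<Phi> \<xi> y" by linarith
  qed
  show ?thesis using comm Ns n2e lt M(1) by blast
qed

lemma word_affW: "set xs \<subseteq> simples \<Phi> \<xi> \<Longrightarrow> foldr (\<circ>) xs id \<in> affW \<Phi>"
proof (induction xs)
  case Nil then show ?case by (simp add: affW_id')
next
  case (Cons a xs)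
  have "a \<in> affW \<Phi>" using Cons.prems simple_affW by simp
  moreover have "foldr (\<circ>) xs id \<in> affW \<Phi>" using Cons.prems by (intro Cons.IH) simp
  ultimately have "a \<circ> foldr (\<circ>) xs id \<in> affW \<Phi>" by (rule affW_comp)
  then show ?case unfolding foldr_Cons comp_apply .
qed

lemma n2_word_le: "set xs \<subseteq> simples \<Phi> \<xi> \<Longrightarrow> n2 \<Phi> \<xi> (foldr (\<circ>) xs id) \<le> 2 * length xs"
proof (induction xs rule: rev_induct)
  case Nil then show ?case by (simp add: n2_id')
next
  case (snoc s xs)
  have xs: "set xs \<subseteq> simples \<Phi> \<xi>" and s: "s \<in> simples \<Phi> \<xi>" using snoc.prems by auto
  define y where "y = foldr (\<circ>) xs id"
  have y: "y \<in> affW \<Phi>" unfolding y_def using word_affW[OF xs] .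
  have e: "foldr (\<circ>) (xs @ [s]) id = y \<circ> s" unfolding y_def foldr_comp_append by simp
  obtain M where "n2 \<Phi> \<xi> (y \<circ> s) = (if M \<in> Nset y then n2 \<Phi> \<xi> y - 2 else n2 \<Phi> \<xi> y + 2)"
    using right_step[OF y s] by blast
  then have "n2 \<Phi> \<xi> (y \<circ> s) \<le> n2 \<Phi> \<xi> y + 2" by (simp split: if_splits)
  moreover have "n2 \<Phi> \<xi> y \<le> 2 * length xs" unfolding y_def by (rule snoc.IH[OF xs])
  ultimately show ?case unfolding e length_append_singleton mult_Suc_right by linarith
qed

lemma Nset_word:
  "set xs \<subseteq> simples \<Phi> \<xi> \<Longrightarrow> \<forall>L\<in>Nset (foldr (\<circ>) xs id). \<exists>i<length xs.
      rl L \<circ> foldr (\<circ>) (take i xs) id = foldr (\<circ>) (take i xs) id \<circ> xs ! i"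
proof (induction xs rule: rev_induct)
  case Nil then show ?case by (simp add: Nset_id')
next
  case (snoc s xs)
  have xs: "set xs \<subseteq> simples \<Phi> \<xi>" and s: "s \<in> simples \<Phi> \<xi>" using snoc.prems by auto
  define y where "y = foldr (\<circ>) xs id"
  have y: "y \<in> affW \<Phi>" unfolding y_def using word_affW[OF xs] .
  have e: "foldr (\<circ>) (xs @ [s]) id = y \<circ> s" unfolding y_def foldr_comp_append by simp
  obtain M where M: "M \<in> Lab \<Phi>" "rl M \<circ> y = y \<circ> s"
     "Nset (y \<circ> s) = (Nset y - {M, negL M}) \<union> ({M, negL M} - Nset y)"
    using right_step[OF y s] by blast
  show ?case
  proof
    fix L assume L: "L \<in> Nset (foldr (\<circ>) (xs @ [s]) id)"
    then have "L \<in> Nset y \<or> L = M \<or> L = negL M" using M(3) e by auto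
    then show "\<exists>i<length (xs @ [s]).
      rl L \<circ> foldr (\<circ>) (take i (xs @ [s])) id = foldr (\<circ>) (take i (xs @ [s])) id \<circ> (xs @ [s]) ! i"
    proof (elim disjE)
      assume "L \<in> Nset y"
      then have "L \<in> Nset (foldr (\<circ>) xs id)" unfolding y_def .
      then obtain i where i: "i < length xs"
        "rl L \<circ> foldr (\<circ>) (take i xs) id = foldr (\<circ>) (take i xs) id \<circ> xs ! i"
        using snoc.IH[OF xs] by blast
      then show ?thesis by (intro exI[of _ i]) (simp add: nth_append)
    next
      assume "L = M"
      then show ?thesis using M(2) by (intro exI[of _ "length xs"]) (simp add: y_def)
    next
      assume "L = negL M"
      then show ?thesis using M(2) rl_neg[of M] by (intro exI[of _ "length xs"]) (simp add: y_def)
    qed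
  qed
qed

lemma simple_invol: "s \<in> simples \<Phi> \<xi> \<Longrightarrow> s \<circ> s = id"
proof -
  assume "s \<in> simples \<Phi> \<xi>"
  then obtain L where "L \<in> Lab \<Phi>" "s = rl L" using simple_Lab by blast
  then show ?thesis using rl_invol[OF Lab_nz] by (auto simp: fun_eq_iff)
qed

lemma exchange:
  assumes xs: "set xs \<subseteq> simples \<Phi> \<xi>" and M: "M \<in> Nset (foldr (\<circ>) xs id)"
  shows "\<exists>zs. set zs \<subseteq> simples \<Phi> \<xi> \<and> length zs < length xs \<and>
     foldr (\<circ>) zs id = rl M \<circ> foldr (\<circ>) xs id"
proof -
  obtain i where i: "i < length xs"
    "rl M \<circ> foldr (\<circ>) (take i xs) id = foldr (\<circ>) (take i xs) id \<circ> xs ! i"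
    using Nset_word[OF xs] M by blast
  define a where "a = foldr (\<circ>) (take i xs) id"
  define u where "u = foldr (\<circ>) (drop (Suc i) xs) id"
  have si: "xs ! i \<in> simples \<Phi> \<xi>" using xs i(1) nth_mem by blast
  have xsplit: "xs = take i xs @ [xs ! i] @ drop (Suc i) xs" using i(1) id_take_nth_drop by simp
  have f0: "foldr (\<circ>) xs id = foldr (\<circ>) (take i xs @ [xs ! i] @ drop (Suc i) xs) id"
    by (rule arg_cong[where f="\<lambda>l. foldr (\<circ>) l id"], rule xsplit)
  have f1: "foldr (\<circ>) [xs ! i] id = xs ! i" by simp
  have f: "foldr (\<circ>) xs id = a \<circ> (xs ! i \<circ> u)"
    unfolding a_def u_def f0 foldr_comp_append f1 by (rule refl)
  have "rl M \<circ> foldr (\<circ>) xs id = (rl M \<circ> a) \<circ> (xs ! i \<circ> u)"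
    unfolding f by (simp only: comp_assoc)
  also have "\<dots> = (a \<circ> xs ! i) \<circ> (xs ! i \<circ> u)" using i(2) unfolding a_def by simp
  also have "\<dots> = a \<circ> ((xs ! i \<circ> xs ! i) \<circ> u)" by (simp only: comp_assoc)
  also have "\<dots> = a \<circ> u" using simple_invol[OF si] by simp
  also have "\<dots> = foldr (\<circ>) (take i xs @ drop (Suc i) xs) id"
    unfolding a_def u_def by (simp only: foldr_comp_append)
  finally have e: "foldr (\<circ>) (take i xs @ drop (Suc i) xs) id = rl M \<circ> foldr (\<circ>) xs id" by simp
  have "set (take i xs @ drop (Suc i) xs) \<subseteq> simples \<Phi> \<xi>"
    using xs set_take_subset set_drop_subset by (metis Un_subset_iff set_append subset_trans)
  moreover have "length (take i xs @ drop (Suc i) xs) < length xs" using i(1) by simp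
  ultimately show ?thesis using e by blast
qed

lemma minimal_word:
  "set xs \<subseteq> simples \<Phi> \<xi> \<Longrightarrow>
   (\<forall>zs. set zs \<subseteq> simples \<Phi> \<xi> \<and> foldr (\<circ>) zs id = foldr (\<circ>) xs id \<longrightarrow> length xs \<le> length zs) \<Longrightarrow>
   n2 \<Phi> \<xi> (foldr (\<circ>) xs id) = 2 * length xs"
proof (induction xs rule: rev_induct)
  case Nil then show ?case by (simp add: n2_id')
next
  case (snoc s xs)
  have xs: "set xs \<subseteq> simples \<Phi> \<xi>" and s: "s \<in> simples \<Phi> \<xi>" using snoc.prems by auto
  define y where "y = foldr (\<circ>) xs id"
  have y: "y \<in> affW \<Phi>" unfolding y_def using word_affW[OF xs] .
  have e: "foldr (\<circ>) (xs @ [s]) id = y \<circ> s" unfolding y_def foldr_comp_append by simp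
  have minxs: "\<forall>zs. set zs \<subseteq> simples \<Phi> \<xi> \<and> foldr (\<circ>) zs id = foldr (\<circ>) xs id \<longrightarrow> length xs \<le> length zs"
  proof (intro allI impI)
    fix zs assume z: "set zs \<subseteq> simples \<Phi> \<xi> \<and> foldr (\<circ>) zs id = foldr (\<circ>) xs id"
    then have "set (zs @ [s]) \<subseteq> simples \<Phi> \<xi>" "foldr (\<circ>) (zs @ [s]) id = foldr (\<circ>) (xs @ [s]) id"
      using s by (auto simp: foldr_comp_append simp del: foldr_append)
    then have "length (xs @ [s]) \<le> length (zs @ [s])" using snoc.prems(2) by blast
    then show "length xs \<le> length zs" by simp
  qed
  have IH: "n2 \<Phi> \<xi> y = 2 * length xs" unfolding y_def by (rule snoc.IH[OF xs minxs])
  obtain M where M: "M \<in> Lab \<Phi>" "rl M \<circ> y = y \<circ> s"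
     "n2 \<Phi> \<xi> (y \<circ> s) = (if M \<in> Nset y then n2 \<Phi> \<xi> y - 2 else n2 \<Phi> \<xi> y + 2)"
    using right_step[OF y s] by blast
  have "M \<notin> Nset y"
  proof
    assume "M \<in> Nset y"
    then have "M \<in> Nset (foldr (\<circ>) xs id)" unfolding y_def .
    from exchange[OF xs this] obtain zs where zs: "set zs \<subseteq> simples \<Phi> \<xi>" "length zs < length xs"
      "foldr (\<circ>) zs id = rl M \<circ> y"
      unfolding y_def by blast
    then have "foldr (\<circ>) zs id = foldr (\<circ>) (xs @ [s]) id" using M(2) e by simp
    then have "length (xs @ [s]) \<le> length zs" using snoc.prems(2) zs(1) by blast
    then show False using zs(2) by simp
  qed
  then have "n2 \<Phi> \<xi> (y \<circ> s) = 2 * length (xs @ [s])" using M(3) IH by simp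
  then show "n2 \<Phi> \<xi> (foldr (\<circ>) (xs @ [s]) id) = 2 * length (xs @ [s])" unfolding e .
qed

lemma len_n2: "w \<in> affW \<Phi> \<Longrightarrow> n2 \<Phi> \<xi> w = 2 * len \<Phi> \<xi> w"
proof -
  assume w: "w \<in> affW \<Phi>"
  define P where "P = (\<lambda>n. \<exists>xs. length xs = n \<and> set xs \<subseteq> simples \<Phi> \<xi> \<and> foldr (\<circ>) xs id = w)"
  have ex: "\<exists>n. P n" using affW_inW[OF w] by (auto simp: P_def inW_def)
  have lenw: "len \<Phi> \<xi> w = (LEAST n. P n)" by (simp add: len_def P_def)
  have "P (LEAST n. P n)" using ex by (rule LeastI_ex)
  then obtain xs where xs: "length xs = len \<Phi> \<xi> w" "set xs \<subseteq> simples \<Phi> \<xi>" "foldr (\<circ>) xs id = w"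
    by (auto simp: P_def lenw)
  have "\<forall>zs. set zs \<subseteq> simples \<Phi> \<xi> \<and> foldr (\<circ>) zs id = foldr (\<circ>) xs id \<longrightarrow> length xs \<le> length zs"
  proof (intro allI impI)
    fix zs assume "set zs \<subseteq> simples \<Phi> \<xi> \<and> foldr (\<circ>) zs id = foldr (\<circ>) xs id"
    then have "P (length zs)" using xs(3) by (auto simp: P_def)
    then have "(LEAST n. P n) \<le> length zs" by (rule Least_le)
    then show "length xs \<le> length zs" using xs(1) lenw by simp
  qed
  from minimal_word[OF xs(2) this] show ?thesis using xs by simp
qed

lemma DR_iff:
  assumes x: "x \<in> affW \<Phi>"
  shows "s \<in> DR \<Phi> \<xi> x \<longleftrightarrow> s \<in> simples \<Phi> \<xi> \<and> n2 \<Phi> \<xi> (x \<circ> s) < n2 \<Phi> \<xi> x"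
proof (cases "s \<in> simples \<Phi> \<xi>")
  case True
  have xs: "x \<circ> s \<in> affW \<Phi>" using affW_comp[OF x simple_affW[OF True]] .
  show ?thesis using True len_n2[OF x] len_n2[OF xs] by (simp add: DR_def)
next
  case False then show ?thesis by (simp add: DR_def)
qed

lemma key_step:
  assumes x: "x \<in> affW \<Phi>" and K: "K \<in> Lab \<Phi>" and s: "s \<in> simples \<Phi> \<xi>"
    and inc: "n2 \<Phi> \<xi> (rl K \<circ> x) = n2 \<Phi> \<xi> x + 2"
    and desc: "n2 \<Phi> \<xi> (rl K \<circ> x \<circ> s) < n2 \<Phi> \<xi> (rl K \<circ> x)"
    and ne: "rl K \<circ> x \<noteq> x \<circ> s"
  shows "n2 \<Phi> \<xi> (x \<circ> s) < n2 \<Phi> \<xi> x"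
proof (rule ccontr)
  assume nlt: "\<not> n2 \<Phi> \<xi> (x \<circ> s) < n2 \<Phi> \<xi> x"
  have KN: "K \<notin> Nset x"
  proof
    assume "K \<in> Nset x"
    from refl_left_dec[OF x K this] show False using inc by simp
  qed
  obtain M where M: "M \<in> Lab \<Phi>" "rl M \<circ> x = x \<circ> s"
     "Nset (x \<circ> s) = (Nset x - {M, negL M}) \<union> ({M, negL M} - Nset x)"
     "n2 \<Phi> \<xi> (x \<circ> s) = (if M \<in> Nset x then n2 \<Phi> \<xi> x - 2 else n2 \<Phi> \<xi> x + 2)"
     "M \<in> Nset x \<longrightarrow> n2 \<Phi> \<xi> (x \<circ> s) < n2 \<Phi> \<xi> x"
    using right_step[OF x s] by blast
  have MN: "M \<notin> Nset x" using M(5) nlt by blast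
  have n2xs: "n2 \<Phi> \<xi> (x \<circ> s) = n2 \<Phi> \<xi> x + 2" using M(4) MN by simp
  have xs: "x \<circ> s \<in> affW \<Phi>" using affW_comp[OF x simple_affW[OF s]] .
  have "K \<in> Nset (x \<circ> s)"
  proof (rule ccontr)
    assume "K \<notin> Nset (x \<circ> s)"
    from refl_left_inc[OF xs K this] have "n2 \<Phi> \<xi> (x \<circ> s) + 2 \<le> n2 \<Phi> \<xi> (rl K \<circ> (x \<circ> s))" .
    then show False using desc inc n2xs by (simp add: comp_assoc)
  qed
  then have "K = M \<or> K = negL M" using M(3) KN by blast
  then have "rl K = rl M" using rl_neg by metis
  then show False using M(2) ne by simp
qed

end

theorem proposition4p7:
  fixes \<Phi> :: "'a::euclidean_space set" and \<xi> :: 'a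
    and w si sj :: "'a \<Rightarrow> 'a" and r :: "nat \<Rightarrow> 'a \<Rightarrow> 'a"
    and \<alpha> :: 'a and c :: int and n :: nat
  assumes "root_system \<Phi>" and "regular \<Phi> \<xi>"
    and "w \<in> affW \<Phi>" and "si \<in> DR \<Phi> \<xi> w"
    and "\<alpha> \<in> \<Phi>"
    and "\<forall>t\<in>{1..n}. r t \<in> affrefls \<Phi> \<and> fixH (r t) = hyp \<alpha> (of_int c + of_nat t)"
    and "\<forall>t\<in>{1..n}. len \<Phi> \<xi> (rprod r t \<circ> w \<circ> si) = len \<Phi> \<xi> (rprod r (t - 1) \<circ> w \<circ> si) + 1"
    and "sj \<in> DR \<Phi> \<xi> (rprod r n \<circ> w \<circ> si)"
    and "\<forall>t\<in>{1..n}. rprod r t \<circ> w \<circ> si \<noteq> rprod r (t - 1) \<circ> w \<circ> si \<circ> sj"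
  shows "\<forall>t\<in>{1..n}. sj \<in> DR \<Phi> \<xi> (rprod r t \<circ> w \<circ> si)"
proof -
  interpret aws \<Phi> \<xi> using assms(1,2) by unfold_locales
  define x where "x t = rprod r t \<circ> w \<circ> si" for t
  have si: "si \<in> simples \<Phi> \<xi>" using assms(4) by (simp add: DR_def)
  have rW: "\<And>t. t \<in> {1..n} \<Longrightarrow> r t \<in> affW \<Phi>"
  proof -
    fix t assume "t \<in> {1..n}"
    then have "r t \<in> affrefls \<Phi>" using assms(6) by blast
    from affW.step[OF this affW.id_in] show "r t \<in> affW \<Phi>" by simp
  qed
  have rprodW: "\<And>t. t \<le> n \<Longrightarrow> rprod r t \<in> affW \<Phi>"
  proof -
    fix t show "t \<le> n \<Longrightarrow> rprod r t \<in> affW \<Phi>"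
    proof (induction t)
      case 0 then show ?case by (simp add: affW_id')
    next
      case (Suc t)
      then have "rprod r t \<in> affW \<Phi>" "r (Suc t) \<in> affW \<Phi>" using rW by auto
      then have "r (Suc t) \<circ> rprod r t \<in> affW \<Phi>" using affW_comp by blast
      then show ?case by (simp add: comp_def)
    qed
  qed
  have xW: "\<And>t. t \<le> n \<Longrightarrow> x t \<in> affW \<Phi>"
    unfolding x_def using rprodW affW_comp assms(3) simple_affW[OF si] by blast
  have xSuc: "\<And>t. x (Suc t) = r (Suc t) \<circ> x t" by (simp add: x_def comp_assoc)
  have main: "\<And>t. 1 \<le> t \<Longrightarrow> t \<le> n \<Longrightarrow> sj \<in> DR \<Phi> \<xi> (x t)"
  proof -
    fix t assume t1: "1 \<le> t" and tn: "t \<le> n"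
    show "sj \<in> DR \<Phi> \<xi> (x t)"
      using tn
    proof (induction t rule: inc_induct)
      case base then show ?case unfolding x_def by (rule assms(8))
    next
      case (step k)
      have k1: "1 \<le> k" "k < n" using step.hyps t1 by auto
      have Sk: "Suc k \<in> {1..n}" using k1 by simp
      have "r (Suc k) \<in> affrefls \<Phi>" using assms(6) Sk by blast
      then obtain K where K: "K \<in> Lab \<Phi>" "r (Suc k) = rl K"
        unfolding affrefls_Lab by blast
      have xk: "x k \<in> affW \<Phi>" using xW k1 by simp
      have xSk: "x (Suc k) \<in> affW \<Phi>" using xW k1 by simp
      have D: "sj \<in> simples \<Phi> \<xi>" "n2 \<Phi> \<xi> (x (Suc k) \<circ> sj) < n2 \<Phi> \<xi> (x (Suc k))"
        using step.IH DR_iff[OF xSk] by auto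
      have L0: "len \<Phi> \<xi> (rprod r (Suc k) \<circ> w \<circ> si) = len \<Phi> \<xi> (rprod r (Suc k - 1) \<circ> w \<circ> si) + 1"
        using assms(7) Sk by blast
      have L: "len \<Phi> \<xi> (x (Suc k)) = len \<Phi> \<xi> (x k) + 1"
        using L0 unfolding x_def by simp
      have inc: "n2 \<Phi> \<xi> (rl K \<circ> x k) = n2 \<Phi> \<xi> (x k) + 2"
        using L len_n2[OF xk] len_n2[OF xSk] xSuc[of k] K(2) by simp
      have ne0: "rprod r (Suc k) \<circ> w \<circ> si \<noteq> rprod r (Suc k - 1) \<circ> w \<circ> si \<circ> sj"
        using assms(9) Sk by blast
      have ne: "rl K \<circ> x k \<noteq> x k \<circ> sj"
        using ne0 xSuc[of k] K(2) unfolding x_def by simp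
      have desc: "n2 \<Phi> \<xi> (rl K \<circ> x k \<circ> sj) < n2 \<Phi> \<xi> (rl K \<circ> x k)"
        using D(2) xSuc[of k] K(2) by simp
      have "n2 \<Phi> \<xi> (x k \<circ> sj) < n2 \<Phi> \<xi> (x k)"
        by (rule key_step[OF xk K(1) D(1) inc desc ne])
      then show ?case using DR_iff[OF xk] D(1) by simp
    qed
  qed
  show ?thesis using main by (simp add: x_def)
qed


end
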